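(* Assume $0<c<1$ and let $b=\tfrac12-c$. For each $\delta>0$ there is an irreducible aperiodic Markov subsystem $T:\bigcup_{j=1}^mJ_j\to\mathbb T$ whose maximal invariant set contains $K_\delta:=\{x\in\mathbb T:d(T^nx,b)\ge\delta\ \forall n\ge0\}$ and does not contain $b$.
   Context: $\mathbb T=\mathbb R/\mathbb Z$, $Tx=2x\bmod1$, $d$ the usual distance on $\mathbb T$. A Markov subsystem $T:\bigcup_{j=1}^mJ_j\to\mathbb T$ is given by closed subintervals $J_1,\dots,J_m$ of $\mathbb T\setminus\{b\}$ with pairwise disjoint interiors such that $T|_{J_j}$ is a homeomorphism onto the subinterval $T(J_j)$ for each $j$, and for each $j,k$ either $T(J_j^o)\cap J_k^o=\emptyset$ or $T(J_j)\supset J_k$. Its maximal invariant set is $\bigcap_{n\ge1}T^{-n}(J_1\cup\dots\cup J_m)$ (intersected with $\bigcup_jJ_j$). It is irreducible if for all $j,k$ there are $j_0=j,j_1,\dots,j_s=k$ with $T(J_{j_i})\supset J_{j_{i+1}}$ for $0\le i<s$, and an irreducible one is aperiodic if there is $N\ge1$ such that for all $j,k$ there are $j_0=j,\dots,j_N=k$ with $T(J_{j_i})\supset J_{j_{i+1}}$ for $0\le i<N$. *)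

theory Defs
  imports "HOL-Analysis.Analysis"
begin

text \<open>The circle T = R/Z is represented by the representatives in [0,1);
  the projection R -> T is frac.\<close>

definition circ :: "real set" where
  "circ = {0..<1}"

definition dbl :: "real \<Rightarrow> real" where
  "dbl x = frac (2 * x)"

definition dT :: "real \<Rightarrow> real \<Rightarrow> real" where
  "dT x y = min (frac (x - y)) (1 - frac (x - y))"

text \<open>Closed arc of T starting at (the image of) a with length l, and its interior
  (for 0 < l < 1 this is the interior in the circle topology).\<close>
definition arc :: "real \<Rightarrow> real \<Rightarrow> real set" where
  "arc a l = {frac t | t. a \<le> t \<and> t \<le> a + l}"

definition arc_open :: "real \<Rightarrow> real \<Rightarrow> real set" where
  "arc_open a l = {frac t | t. a < t \<and> t < a + l}"

definition is_closed_subinterval :: "real set \<Rightarrow> bool" where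
  "is_closed_subinterval S \<longleftrightarrow> (\<exists>a l. 0 < l \<and> l < 1 \<and> S = arc a l)"

text \<open>Markov subsystem given by the m intervals J_j = arc (a j) (l j), j < m,
  contained in T minus {b}.  The homeomorphism condition of T restricted to J_j onto a
  subinterval is expressed as injectivity plus image being a closed subinterval
  (continuity of the doubling map on the circle is automatic, and a continuous
  bijection from a compact space to a Hausdorff space is a homeomorphism).\<close>
definition markov_subsystem :: "real \<Rightarrow> nat \<Rightarrow> (nat \<Rightarrow> real) \<Rightarrow> (nat \<Rightarrow> real) \<Rightarrow> bool" where
  "markov_subsystem b m a l \<longleftrightarrow>
     1 \<le> m \<and>
     (\<forall>j<m. 0 < l j \<and> l j < 1 \<and> b \<notin> arc (a j) (l j)) \<and>
     (\<forall>j<m. \<forall>k<m. j \<noteq> k \<longrightarrow> arc_open (a j) (l j) \<inter> arc_open (a k) (l k) = {}) \<and>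
     (\<forall>j<m. inj_on dbl (arc (a j) (l j)) \<and> is_closed_subinterval (dbl ` arc (a j) (l j))) \<and>
     (\<forall>j<m. \<forall>k<m. dbl ` arc_open (a j) (l j) \<inter> arc_open (a k) (l k) = {}
                   \<or> arc (a k) (l k) \<subseteq> dbl ` arc (a j) (l j))"

definition trans_graph :: "nat \<Rightarrow> (nat \<Rightarrow> real) \<Rightarrow> (nat \<Rightarrow> real) \<Rightarrow> (nat \<times> nat) set" where
  "trans_graph m a l = {(j, k). j < m \<and> k < m \<and> arc (a k) (l k) \<subseteq> dbl ` arc (a j) (l j)}"

definition irreducible_ms :: "nat \<Rightarrow> (nat \<Rightarrow> real) \<Rightarrow> (nat \<Rightarrow> real) \<Rightarrow> bool" where
  "irreducible_ms m a l \<longleftrightarrow> (\<forall>j<m. \<forall>k<m. (j, k) \<in> (trans_graph m a l)\<^sup>*)"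

definition aperiodic_ms :: "nat \<Rightarrow> (nat \<Rightarrow> real) \<Rightarrow> (nat \<Rightarrow> real) \<Rightarrow> bool" where
  "aperiodic_ms m a l \<longleftrightarrow>
     (\<exists>N\<ge>1. \<forall>j<m. \<forall>k<m. (j, k) \<in> (trans_graph m a l) ^^ N)"

definition max_inv_set :: "nat \<Rightarrow> (nat \<Rightarrow> real) \<Rightarrow> (nat \<Rightarrow> real) \<Rightarrow> real set" where
  "max_inv_set m a l = {x. \<forall>n. (dbl ^^ n) x \<in> (\<Union>j<m. arc (a j) (l j))}"

definition K_set :: "real \<Rightarrow> real \<Rightarrow> real set" where
  "K_set b \<delta> = {x \<in> circ. \<forall>n. dT ((dbl ^^ n) x) b \<ge> \<delta>}"

end

theory Submission
  imports Defs
begin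
lemma frac_2frac: "frac (2 * frac (y::real)) = frac (2 * y)"
proof -
  have "2 * frac y = 2*y + of_int (-2 * \<lfloor>y\<rfloor>)" by (simp add: frac_def)
  then show ?thesis by (simp only: frac_add_of_int_right)
qed

lemma dbl_frac: "dbl (frac y) = frac (2 * y)"
  by (simp add: dbl_def frac_2frac)

lemma dbl_iter: "0 \<le> x \<Longrightarrow> x < (1::real) \<Longrightarrow> (dbl ^^ n) x = frac (2^n * x)"
proof (induction n)
  case 0 then show ?case by simp
next
  case (Suc n)
  have "(dbl ^^ Suc n) x = dbl (frac (2^n * x))" using Suc by simp
  also have "\<dots> = frac (2^Suc n * x)" by (simp add: dbl_frac mult.assoc)
  finally show ?case .
qed

lemma dbl_range: "0 \<le> dbl x \<and> dbl x < 1"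
  by (simp add: dbl_def frac_lt_1)

lemma dbl_iter_range: "0 \<le> x \<Longrightarrow> x < 1 \<Longrightarrow> 0 \<le> (dbl ^^ n) x \<and> (dbl ^^ n) x < 1"
  by (simp add: dbl_iter frac_lt_1)

lemma dT_nonneg: "0 \<le> dT x y"
  by (simp add: dT_def frac_lt_1 less_imp_le)

lemma dT_le_int: "dT x y \<le> \<bar>x - y - of_int k\<bar>"
proof -
  define d where "d = x - y"
  have d: "d = frac d + of_int \<lfloor>d\<rfloor>" by (simp add: frac_def)
  have f0: "0 \<le> frac d" "frac d < 1" by (auto simp: frac_lt_1)
  show ?thesis
  proof (cases "\<lfloor>d\<rfloor> - k \<ge> 0")
    case True
    then have "\<bar>d - of_int k\<bar> \<ge> frac d" using d f0
      by (smt (verit, ccfv_SIG) of_int_0_le_iff of_int_diff)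
    then show ?thesis by (simp add: dT_def d_def)
  next
    case False
    then have "\<lfloor>d\<rfloor> - k \<le> -1" by simp
    then have "real_of_int (\<lfloor>d\<rfloor> - k) \<le> -1" by linarith
    then have "\<bar>d - of_int k\<bar> \<ge> 1 - frac d" using d f0 by simp
    then show ?thesis by (simp add: dT_def d_def)
  qed
qed

lemma dT_attained: "\<exists>k::int. dT x y = \<bar>x - y - of_int k\<bar>"
proof -
  define d where "d = x - y"
  have d: "d = frac d + of_int \<lfloor>d\<rfloor>" by (simp add: frac_def)
  have f0: "0 \<le> frac d" "frac d < 1" by (auto simp: frac_lt_1)
  show ?thesis
  proof (cases "frac d \<le> 1 - frac d")
    case True
    then have "dT x y = \<bar>d - of_int \<lfloor>d\<rfloor>\<bar>" using f0 by (simp add: dT_def d_def frac_def)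
    then show ?thesis unfolding d_def by blast
  next
    case False
    then have "dT x y = \<bar>d - of_int (\<lfloor>d\<rfloor> + 1)\<bar>" using f0 by (simp add: dT_def d_def frac_def)
    then show ?thesis unfolding d_def by blast
  qed
qed

lemma dT_le_abs: "dT x y \<le> \<bar>x - y\<bar>"
  using dT_le_int[of x y 0] by simp

lemma dT_sym: "dT x y = dT y x"
proof -
  obtain k where k: "dT x y = \<bar>x - y - of_int k\<bar>" using dT_attained by blast
  obtain j where j: "dT y x = \<bar>y - x - of_int j\<bar>" using dT_attained by blast
  have "dT y x \<le> \<bar>y - x - of_int (-k)\<bar>" by (rule dT_le_int)
  moreover have "dT x y \<le> \<bar>x - y - of_int (-j)\<bar>" by (rule dT_le_int)
  ultimately show ?thesis using k j by linarith
qed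

lemma dT_triangle: "dT x z \<le> dT x y + dT y z"
proof -
  obtain k where k: "dT x y = \<bar>x - y - of_int k\<bar>" using dT_attained by blast
  obtain j where j: "dT y z = \<bar>y - z - of_int j\<bar>" using dT_attained by blast
  have "dT x z \<le> \<bar>x - z - of_int (k + j)\<bar>" by (rule dT_le_int)
  then show ?thesis using k j by simp
qed

lemma dT_frac_left: "dT (frac x) y = dT x y"
proof -
  have "frac x - y = (x - y) + of_int (- \<lfloor>x\<rfloor>)" by (simp add: frac_def)
  then have "frac (frac x - y) = frac (x - y)" by (simp only: frac_add_of_int_right)
  then show ?thesis by (simp add: dT_def)
qed

lemma dT_frac_right: "dT x (frac y) = dT x y"
  by (metis dT_sym dT_frac_left)

lemma dT_dbl: "dT (dbl x) (dbl y) \<le> 2 * dT x y"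
proof -
  obtain k where k: "dT x y = \<bar>x - y - of_int k\<bar>" using dT_attained by blast
  have e: "dbl x - dbl y - of_int (2*k - \<lfloor>2*x\<rfloor> + \<lfloor>2*y\<rfloor>) = 2 * (x - y - of_int k)"
    by (simp add: dbl_def frac_def algebra_simps)
  have "dT (dbl x) (dbl y) \<le> \<bar>dbl x - dbl y - of_int (2*k - \<lfloor>2*x\<rfloor> + \<lfloor>2*y\<rfloor>)\<bar>"
    by (rule dT_le_int)
  also have "\<dots> = 2 * \<bar>x - y - of_int k\<bar>" by (simp only: e abs_mult)
  finally show ?thesis using k by simp
qed

lemma dT_iter: "dT ((dbl ^^ n) x) ((dbl ^^ n) y) \<le> 2^n * dT x y"
proof (induction n)
  case 0 then show ?case by simp
next
  case (Suc n)
  have "dT ((dbl ^^ Suc n) x) ((dbl ^^ Suc n) y) \<le> 2 * dT ((dbl ^^ n) x) ((dbl ^^ n) y)"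
    by (simp add: dT_dbl)
  also have "\<dots> \<le> 2 * (2^n * dT x y)" using Suc by simp
  finally show ?case by simp
qed

lemma dT_01: assumes "0 \<le> x" "x < 1" "0 \<le> y" "y < 1"
  shows "dT x y = min \<bar>x - y\<bar> (1 - \<bar>x - y\<bar>)"
proof (cases "y \<le> x")
  case True
  then have "frac (x - y) = x - y" using assms by (simp add: frac_eq)
  then show ?thesis using True by (simp add: dT_def)
next
  case False
  have "frac (x - y) = x - y + 1" using assms False
    by (subst frac_unique_iff) simp
  then show ?thesis using False by (simp add: dT_def min.commute)
qed

lemma dT_pos: assumes "0 \<le> x" "x < 1" "0 \<le> y" "y < 1" "x \<noteq> y"
  shows "dT x y > 0"
  using dT_01[OF assms(1-4)] assms by auto

lemma dT_ge_sub: "dT x z \<ge> dT x y - dT y z"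
  using dT_triangle[of x y z] dT_sym[of z y] by linarith

lemma arc_shift: "arc (a + of_int j) l = arc a l"
proof -
  have "arc (a + of_int j) l \<subseteq> arc a l"
  proof
    fix x assume "x \<in> arc (a + of_int j) l"
    then obtain t where t: "x = frac t" "a + of_int j \<le> t" "t \<le> a + of_int j + l" by (auto simp: arc_def)
    have "x = frac (t - of_int j)" using t(1) by (simp add: frac_def)
    then show "x \<in> arc a l" using t by (auto simp: arc_def intro!: exI[of _ "t - of_int j"])
  qed
  moreover have "arc a l \<subseteq> arc (a + of_int j) l"
  proof
    fix x assume "x \<in> arc a l"
    then obtain t where t: "x = frac t" "a \<le> t" "t \<le> a + l" by (auto simp: arc_def)
    have "x = frac (t + of_int j)" using t(1) by simp
    then show "x \<in> arc (a + of_int j) l" using t by (auto simp: arc_def intro!: exI[of _ "t + of_int j"])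
  qed
  ultimately show ?thesis by blast
qed

lemma arc_open_shift: "arc_open (a + of_int j) l = arc_open a l"
proof -
  have "arc_open (a + of_int j) l \<subseteq> arc_open a l"
  proof
    fix x assume "x \<in> arc_open (a + of_int j) l"
    then obtain t where t: "x = frac t" "a + of_int j < t" "t < a + of_int j + l" by (auto simp: arc_open_def)
    have "x = frac (t - of_int j)" using t(1) by (simp add: frac_def)
    then show "x \<in> arc_open a l" using t by (auto simp: arc_open_def intro!: exI[of _ "t - of_int j"])
  qed
  moreover have "arc_open a l \<subseteq> arc_open (a + of_int j) l"
  proof
    fix x assume "x \<in> arc_open a l"
    then obtain t where t: "x = frac t" "a < t" "t < a + l" by (auto simp: arc_open_def)
    have "x = frac (t + of_int j)" using t(1) by simp
    then show "x \<in> arc_open (a + of_int j) l" using t by (auto simp: arc_open_def intro!: exI[of _ "t + of_int j"])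
  qed
  ultimately show ?thesis by blast
qed

lemma dbl_image_arc: "dbl ` arc a l = arc (2*a) (2*l)"
proof
  show "dbl ` arc a l \<subseteq> arc (2*a) (2*l)"
    by (auto simp: arc_def dbl_frac)
  show "arc (2*a) (2*l) \<subseteq> dbl ` arc a l"
  proof
    fix x assume "x \<in> arc (2*a) (2*l)"
    then obtain u where u: "x = frac u" "2*a \<le> u" "u \<le> 2*a + 2*l" by (auto simp: arc_def)
    have "x = dbl (frac (u/2))" using u(1) by (simp add: dbl_frac)
    moreover have "frac (u/2) \<in> arc a l" using u by (auto simp: arc_def)
    ultimately show "x \<in> dbl ` arc a l" by blast
  qed
qed

lemma dbl_image_arc_open: "dbl ` arc_open a l = arc_open (2*a) (2*l)"
proof
  show "dbl ` arc_open a l \<subseteq> arc_open (2*a) (2*l)"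
    by (auto simp: arc_open_def dbl_frac)
  show "arc_open (2*a) (2*l) \<subseteq> dbl ` arc_open a l"
  proof
    fix x assume "x \<in> arc_open (2*a) (2*l)"
    then obtain u where u: "x = frac u" "2*a < u" "u < 2*a + 2*l" by (auto simp: arc_open_def)
    have "x = dbl (frac (u/2))" using u(1) by (simp add: dbl_frac)
    moreover have "frac (u/2) \<in> arc_open a l" using u by (auto simp: arc_open_def)
    ultimately show "x \<in> dbl ` arc_open a l" by blast
  qed
qed

lemma arc_dT: assumes "u \<in> arc a l" "v \<in> arc a l" shows "dT u v \<le> l"
proof -
  obtain t1 where t1: "u = frac t1" "a \<le> t1" "t1 \<le> a + l" using assms(1) by (auto simp: arc_def)
  obtain t2 where t2: "v = frac t2" "a \<le> t2" "t2 \<le> a + l" using assms(2) by (auto simp: arc_def)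
  have "dT u v = dT t1 t2" using t1 t2 by (simp add: dT_frac_left dT_frac_right)
  also have "\<dots> \<le> \<bar>t1 - t2\<bar>" by (rule dT_le_abs)
  also have "\<dots> \<le> l" using t1 t2 by linarith
  finally show ?thesis .
qed

lemma inj_dbl_arc: assumes "l < 1/2" shows "inj_on dbl (arc a l)"
proof
  fix x y assume x: "x \<in> arc a l" and y: "y \<in> arc a l" and e: "dbl x = dbl y"
  obtain t1 where t1: "x = frac t1" "a \<le> t1" "t1 \<le> a + l" using x by (auto simp: arc_def)
  obtain t2 where t2: "y = frac t2" "a \<le> t2" "t2 \<le> a + l" using y by (auto simp: arc_def)
  have "frac (2*t1) = frac (2*t2)" using e t1 t2 by (simp add: dbl_frac)
  then have "frac (2*t1 - 2*t2) = 0" by (rule frac_diff_eq)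
  then have "2*t1 - 2*t2 \<in> \<int>" by simp
  then obtain k where k: "2*t1 - 2*t2 = of_int k" by (auto elim: Ints_cases)
  have "\<bar>2*t1 - 2*t2\<bar> < 1" using t1 t2 assms by linarith
  then have "\<bar>k\<bar> < 1" using k by (metis of_int_abs of_int_less_1_iff)
  then have "k = 0" by simp
  then have "t1 = t2" using k by simp
  then show "x = y" using t1 t2 by simp
qed

definition cellf :: "nat \<Rightarrow> real \<Rightarrow> nat" where
  "cellf M u = nat \<lfloor>real M * u\<rfloor>"

lemma cell_bounds: assumes "0 \<le> u" shows "real (cellf M u) \<le> real M * u" "real M * u < real (cellf M u) + 1"
proof -
  have "0 \<le> real M * u" using assms by simp
  then have "0 \<le> \<lfloor>real M * u\<rfloor>" by simp
  then have "real (cellf M u) = real_of_int \<lfloor>real M * u\<rfloor>" by (simp add: cellf_def)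
  then show "real (cellf M u) \<le> real M * u" "real M * u < real (cellf M u) + 1"
    by linarith+
qed

lemma cell_lt: assumes "0 \<le> u" "u < 1" "0 < M" shows "cellf M u < M"
proof -
  have "real (cellf M u) \<le> real M * u" using cell_bounds assms by blast
  also have "\<dots> < real M" using assms by simp
  finally show ?thesis by simp
qed

lemma cell_arc: assumes "0 \<le> u" "u < 1" "0 < M" shows "u \<in> arc (real (cellf M u) / real M) (1 / real M)"
proof -
  have "real (cellf M u) \<le> real M * u" "real M * u < real (cellf M u) + 1"
    using cell_bounds assms by blast+
  then have "real (cellf M u) / real M \<le> u" "u \<le> real (cellf M u) / real M + 1 / real M"
    using assms by (simp_all add: field_simps)
  moreover have "frac u = u" using assms by (simp add: frac_eq)
  ultimately show ?thesis unfolding arc_def by (metis (mono_tags, lifting) mem_Collect_eq)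
qed

lemma cell_unique: assumes "real k \<le> real M * u" "real M * u < real k + 1" shows "cellf M u = k"
proof -
  have "\<lfloor>real M * u\<rfloor> = int k" using assms by (simp add: floor_eq_iff)
  then show ?thesis by (simp add: cellf_def)
qed

lemma floor_two: assumes "real_of_int j \<le> x" "x < real_of_int j + 2"
  shows "\<lfloor>x\<rfloor> = j \<or> \<lfloor>x\<rfloor> = j + 1"
proof (cases "x < real_of_int j + 1")
  case True then show ?thesis using assms by (simp add: floor_eq_iff)
next
  case False then show ?thesis using assms by (simp add: floor_eq_iff)
qed

lemma cell_dbl: assumes "0 \<le> u" "u < 1" "M = 2^N" "1 \<le> N"
  shows "cellf M (dbl u) = (2 * cellf M u) mod M \<or> cellf M (dbl u) = (2 * cellf M u + 1) mod M"
proof -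
  define k where "k = cellf M u"
  have Mp: "0 < M" using assms by simp
  have kb: "real k \<le> real M * u" "real M * u < real k + 1" using cell_bounds assms unfolding k_def by blast+
  have kM: "k < M" using cell_lt assms Mp unfolding k_def by blast
  obtain H where H: "M = 2 * H" using assms by (metis One_nat_def Suc_le_lessD power_eq_if less_not_refl2 mult.commute neq0_conv power_0 zero_less_Suc power_Suc)
  show ?thesis
  proof (cases "2 * u < 1")
    case True
    then have d: "dbl u = 2*u" using assms by (simp add: dbl_def frac_eq)
    have a1: "real (2*k) \<le> real M * (2*u)" using kb by simp
    have "real M * (2*u) < real M * 1" using True Mp by (intro mult_strict_left_mono) auto
    then have "real (2*k) < real M" using a1 by simp
    then have "2*k < M" by linarith
    then have k2: "2*k + 1 < M" using H by presburger
    have "real_of_int (int (2*k)) \<le> real M * dbl u" "real M * dbl u < real_of_int (int (2*k)) + 2"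
      using kb d by (simp_all add: algebra_simps)
    then have "\<lfloor>real M * dbl u\<rfloor> = int (2*k) \<or> \<lfloor>real M * dbl u\<rfloor> = int (2*k) + 1" by (rule floor_two)
    then have "cellf M (dbl u) = 2*k \<or> cellf M (dbl u) = 2*k+1" by (auto simp: cellf_def)
    then show ?thesis using k2 by (simp add: k_def[symmetric])
  next
    case False
    then have d: "dbl u = 2*u - 1" using assms by (simp add: dbl_def frac_unique_iff)
    have "real M \<le> real M * (2*u)" using False Mp by simp
    then have "real M < real (2*k+2)" using kb by simp
    then have "M < 2*k+2" by linarith
    then have k2: "M \<le> 2*k" using H by presburger
    have "real_of_int (int (2*k - M)) \<le> real M * dbl u" "real M * dbl u < real_of_int (int (2*k - M)) + 2"
    proof -
      have e: "real M * dbl u = 2 * (real M * u) - real M" unfolding d by (simp add: algebra_simps)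
      have f: "real_of_int (int (2*k - M)) = 2 * real k - real M" using k2 by (simp add: of_nat_diff)
      show "real_of_int (int (2*k - M)) \<le> real M * dbl u" "real M * dbl u < real_of_int (int (2*k - M)) + 2"
        unfolding e f using kb by linarith+
    qed
    then have "\<lfloor>real M * dbl u\<rfloor> = int (2*k - M) \<or> \<lfloor>real M * dbl u\<rfloor> = int (2*k - M) + 1" by (rule floor_two)
    then have c: "cellf M (dbl u) = 2*k - M \<or> cellf M (dbl u) = 2*k+1-M" using k2 by (auto simp: cellf_def)
    have "(2*k) mod M = 2*k - M" using k2 kM by (simp add: mod_if)
    moreover have "(2*k+1) mod M = 2*k+1 - M" using k2 kM by (simp add: mod_if)
    ultimately show ?thesis using c by (simp add: k_def[symmetric])
  qed
qed

definition SCC :: "('a \<times> 'a) set \<Rightarrow> 'a \<Rightarrow> 'a set" where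
  "SCC G h = {v. (h, v) \<in> G\<^sup>* \<and> (v, h) \<in> G\<^sup>*}"

definition restr :: "('a \<times> 'a) set \<Rightarrow> 'a set \<Rightarrow> ('a \<times> 'a) set" where
  "restr G S = {(u, v). (u, v) \<in> G \<and> u \<in> S \<and> v \<in> S}"

lemma relpow_restr_SCC:
  assumes "(u, v) \<in> G ^^ n" "u \<in> SCC G h" "v \<in> SCC G h"
  shows "(u, v) \<in> restr G (SCC G h) ^^ n"
  using assms
proof (induction n arbitrary: u)
  case 0 then show ?case by simp
next
  case (Suc n)
  obtain w where w: "(u, w) \<in> G" "(w, v) \<in> G ^^ n" using Suc.prems(1) by (metis relpow_Suc_D2)
  have "(w, v) \<in> G\<^sup>*" using w(2) by (metis relpow_imp_rtrancl)
  moreover have "(h, u) \<in> G\<^sup>*" "(u, h) \<in> G\<^sup>*" "(h, v) \<in> G\<^sup>*" "(v, h) \<in> G\<^sup>*"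
    using Suc.prems by (auto simp: SCC_def)
  ultimately have wS: "w \<in> SCC G h"
  proof -
    have "(h, w) \<in> G\<^sup>*" using \<open>(h, u) \<in> G\<^sup>*\<close> w(1) by (rule rtrancl.rtrancl_into_rtrancl)
    moreover have "(w, h) \<in> G\<^sup>*" using \<open>(w, v) \<in> G\<^sup>*\<close> \<open>(v, h) \<in> G\<^sup>*\<close> by (rule rtrancl_trans)
    ultimately show ?thesis by (simp add: SCC_def)
  qed
  have "(w, v) \<in> restr G (SCC G h) ^^ n" using Suc.IH[OF w(2) wS Suc.prems(3)] .
  moreover have "(u, w) \<in> restr G (SCC G h)" using w(1) wS Suc.prems(2) by (simp add: restr_def)
  ultimately show ?case by (metis relpow_Suc_I2)
qed

lemma rtrancl_restr_SCC:
  assumes "(u, v) \<in> G\<^sup>*" "u \<in> SCC G h" "v \<in> SCC G h"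
  shows "(u, v) \<in> (restr G (SCC G h))\<^sup>*"
proof -
  obtain n where "(u, v) \<in> G ^^ n" using assms(1) by (metis rtrancl_imp_relpow)
  then have "(u, v) \<in> restr G (SCC G h) ^^ n" by (rule relpow_restr_SCC[OF _ assms(2,3)])
  then show ?thesis by (metis relpow_imp_rtrancl)
qed

lemma h_in_SCC: "h \<in> SCC G h" by (simp add: SCC_def)

lemma SCC_irred:
  assumes "u \<in> SCC G h" "v \<in> SCC G h"
  shows "(u, v) \<in> (restr G (SCC G h))\<^sup>*"
proof -
  have "(u, h) \<in> G\<^sup>*" "(h, v) \<in> G\<^sup>*" using assms by (auto simp: SCC_def)
  then have "(u, v) \<in> G\<^sup>*" by (rule rtrancl_trans)
  then show ?thesis by (rule rtrancl_restr_SCC[OF _ assms])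
qed

lemma relpow_add_I: "(a, b) \<in> R ^^ m \<Longrightarrow> (b, c) \<in> R ^^ n \<Longrightarrow> (a, c) \<in> R ^^ (m + n)"
  by (metis relcomp.relcompI relpow_add)

lemma aperiodic_from_hub:
  assumes fin: "finite S"
    and tto: "\<And>u. u \<in> S \<Longrightarrow> (u, h) \<in> GS\<^sup>*"
    and frm: "\<And>u. u \<in> S \<Longrightarrow> (h, u) \<in> GS\<^sup>*"
    and loops: "\<And>n. n \<ge> n0 \<Longrightarrow> (h, h) \<in> GS ^^ n"
  shows "\<exists>P\<ge>1. \<forall>u\<in>S. \<forall>v\<in>S. (u, v) \<in> GS ^^ P"
proof -
  have "\<forall>u\<in>S. \<exists>a. (u, h) \<in> GS ^^ a" using tto by (meson rtrancl_imp_relpow)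
  then obtain a where a: "\<And>u. u \<in> S \<Longrightarrow> (u, h) \<in> GS ^^ a u" by metis
  have "\<forall>u\<in>S. \<exists>c. (h, u) \<in> GS ^^ c" using frm by (meson rtrancl_imp_relpow)
  then obtain c where c: "\<And>u. u \<in> S \<Longrightarrow> (h, u) \<in> GS ^^ c u" by metis
  define A where "A = Max (a ` S)"
  define C where "C = Max (c ` S)"
  define P where "P = A + C + n0 + 1"
  have P: "\<forall>u\<in>S. \<forall>v\<in>S. (u, v) \<in> GS ^^ P"
  proof (intro ballI)
    fix u v assume u: "u \<in> S" and v: "v \<in> S"
    have au: "a u \<le> A" unfolding A_def using fin u by simp
    have cv: "c v \<le> C" unfolding C_def using fin v by simp
    have "(h, h) \<in> GS ^^ (P - a u - c v)" using loops au cv unfolding P_def by simp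
    then have "(u, h) \<in> GS ^^ (a u + (P - a u - c v))" by (rule relpow_add_I[OF a[OF u]])
    then have "(u, v) \<in> GS ^^ (a u + (P - a u - c v) + c v)" using c[OF v] by (rule relpow_add_I)
    moreover have "a u + (P - a u - c v) + c v = P" using au cv unfolding P_def by simp
    ultimately show "(u, v) \<in> GS ^^ P" by simp
  qed
  moreover have "P \<ge> 1" unfolding P_def by simp
  ultimately show ?thesis by blast
qed

lemma loops_from_loop: "(h, h) \<in> R \<Longrightarrow> (h, h) \<in> R ^^ n"
  by (induction n) (auto intro: relpow_Suc_I)

lemma loops_from_2_odd:
  assumes two: "(h, h) \<in> R ^^ 2" and oq: "(h, h) \<in> R ^^ q" and odd: "odd q" and n: "n \<ge> q"
  shows "(h, h) \<in> R ^^ n"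
proof -
  have ev: "(h, h) \<in> R ^^ (2 * k)" for k
  proof (induction k)
    case 0 then show ?case by simp
  next
    case (Suc k)
    have "(h, h) \<in> R ^^ (2 * k + 2)" using relpow_add_I[OF Suc two] .
    then show ?case by simp
  qed
  show ?thesis
  proof (cases "even n")
    case True
    then obtain k where "n = 2 * k" by blast
    then show ?thesis using ev by simp
  next
    case False
    then have "even (n - q)" using odd n by simp
    then obtain k where k: "n - q = 2 * k" by blast
    have "(h, h) \<in> R ^^ (q + 2 * k)" using relpow_add_I[OF oq ev] .
    moreover have "q + 2 * k = n" using k n by simp
    ultimately show ?thesis by simp
  qed
qed

definition Rset :: "nat \<Rightarrow> real \<Rightarrow> nat set" where
  "Rset M b = {k. k < M \<and> b \<in> arc (real k / real M) (1 / real M)}"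

definition Eg :: "nat \<Rightarrow> (nat \<times> nat) set" where
  "Eg M = {(k, l). k < M \<and> l < M \<and> (l = (2*k) mod M \<or> l = (2*k+1) mod M)}"

definition Gg :: "nat \<Rightarrow> real \<Rightarrow> (nat \<times> nat) set" where
  "Gg M b = {(k, l). (k, l) \<in> Eg M \<and> k \<notin> Rset M b \<and> l \<notin> Rset M b}"

lemma not_R: assumes "0 \<le> u" "u < 1" "0 < M" "dT u b > 1 / real M"
  shows "cellf M u \<notin> Rset M b"
proof
  assume "cellf M u \<in> Rset M b"
  then have "b \<in> arc (real (cellf M u) / real M) (1 / real M)" by (simp add: Rset_def)
  moreover have "u \<in> arc (real (cellf M u) / real M) (1 / real M)" using cell_arc assms by blast
  ultimately have "dT u b \<le> 1 / real M" using arc_dT by blast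
  then show False using assms by simp
qed

lemma path_relpow:
  assumes M: "M = 2^N" "1 \<le> N" and z: "0 \<le> z" "z < 1"
    and far: "\<And>t. t \<le> n \<Longrightarrow> dT ((dbl ^^ t) z) b > 1 / real M"
  shows "(cellf M z, cellf M ((dbl ^^ n) z)) \<in> Gg M b ^^ n"
  using far
proof (induction n)
  case 0 then show ?case by simp
next
  case (Suc n)
  have IH: "(cellf M z, cellf M ((dbl ^^ n) z)) \<in> Gg M b ^^ n" using Suc by simp
  define u where "u = (dbl ^^ n) z"
  have u: "0 \<le> u" "u < 1" using dbl_iter_range z unfolding u_def by blast+
  have Mp: "0 < M" using M by simp
  have du: "0 \<le> dbl u" "dbl u < 1" using dbl_range by blast+
  have e: "(cellf M u, cellf M (dbl u)) \<in> Eg M"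
    using cell_dbl[OF u M] cell_lt[OF u Mp] cell_lt[OF du Mp] by (auto simp: Eg_def)
  have n1: "cellf M u \<notin> Rset M b" using not_R[OF u Mp] Suc.prems[of n] unfolding u_def by simp
  have n2: "cellf M (dbl u) \<notin> Rset M b" using not_R[OF du Mp] Suc.prems[of "Suc n"] unfolding u_def by simp
  have "(cellf M u, cellf M (dbl u)) \<in> Gg M b" using e n1 n2 by (simp add: Gg_def)
  then show ?case using IH unfolding u_def by (auto intro: relpow_Suc_I)
qed

lemma path_rtrancl:
  assumes M: "M = 2^N" "1 \<le> N" and z: "0 \<le> z" "z < 1"
    and far: "\<And>t. t \<le> n \<Longrightarrow> dT ((dbl ^^ t) z) b > 1 / real M"
  shows "(cellf M z, cellf M ((dbl ^^ n) z)) \<in> (Gg M b)\<^sup>*"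
  using path_relpow[OF assms] by (rule relpow_imp_rtrancl)

lemma frac_nat_add: "frac (real c + t) = frac t"
proof -
  have "real c + t = t + of_int (int c)" by simp
  then show ?thesis by (simp only: frac_add_of_int_right)
qed

lemma dbl_iter_any: "(dbl ^^ Suc n) x = frac (2^Suc n * x)"
proof (induction n)
  case 0 then show ?case by (simp add: dbl_def)
next
  case (Suc n)
  have "(dbl ^^ Suc (Suc n)) x = dbl (frac (2^Suc n * x))" using Suc by simp
  also have "\<dots> = frac (2^Suc (Suc n) * x)" by (simp add: dbl_frac mult.assoc)
  finally show ?case .
qed

lemma forward_lemma:
  assumes M: "M = 2^N" "1 \<le> N" "K \<le> N"
    and x: "0 \<le> x" "x < 1" "\<And>n. dT ((dbl ^^ n) x) b \<ge> d0"
    and K: "1 / 2^K \<le> d0 / 2" and Md: "1 / real M < d0 / 2"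
    and tau: "0 \<le> tau" "tau < 1"
    and junc: "\<And>s. s < K \<Longrightarrow> dT tau ((dbl ^^ s) b) > 2^K / real M"
    and orb: "\<And>k. k \<le> n \<Longrightarrow> dT ((dbl ^^ k) tau) b > 1 / real M"
  shows "(cellf M x, cellf M ((dbl ^^ n) tau)) \<in> (Gg M b)\<^sup>*"
proof -
  define c where "c = cellf M x"
  have Mp: "0 < M" using M by simp
  have Mr: "real M = 2^N" using M by simp
  have cM: "c < M" using cell_lt x Mp unfolding c_def by blast
  have cx: "real c \<le> real M * x" "real M * x < real c + 1" using cell_bounds x unfolding c_def by blast+
  define z where "z = (real c + tau) / real M"
  have cM': "real c + 1 \<le> real M" using cM by linarith
  have z01: "0 \<le> z" "z < 1" using tau cM' Mp unfolding z_def by (simp_all add: field_simps)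
  have Mz: "real M * z = real c + tau" unfolding z_def using Mp by simp
  have cz: "cellf M z = c" using Mz tau by (intro cell_unique) simp_all
  have zN: "(dbl ^^ N) z = tau"
  proof -
    have "(dbl ^^ N) z = frac (2^N * z)" using dbl_iter z01 by blast
    also have "2^N * z = real c + tau" using Mz Mr by simp
    finally show ?thesis using tau by (simp add: frac_nat_add frac_eq)
  qed
  have zx: "\<bar>z - x\<bar> < 1 / real M"
  proof -
    have "\<bar>real M * z - real M * x\<bar> < 1" using Mz cx tau by linarith
    moreover have "real M * z - real M * x = real M * (z - x)" by (simp add: algebra_simps)
    then have "real M * \<bar>z - x\<bar> = \<bar>real M * z - real M * x\<bar>" by (simp add: abs_mult)
    ultimately have "real M * \<bar>z - x\<bar> < 1" by simp
    then show ?thesis using Mp by (simp add: field_simps)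
  qed
  have far: "dT ((dbl ^^ t) z) b > 1 / real M" if t: "t \<le> N + n" for t
  proof (cases "t \<le> N - K")
    case True
    have "dT ((dbl ^^ t) z) ((dbl ^^ t) x) = dT (frac (2^t * z)) (frac (2^t * x))"
      using dbl_iter z01 x by simp
    also have "\<dots> = dT (2^t * z) (2^t * x)" by (simp add: dT_frac_left dT_frac_right)
    also have "\<dots> \<le> \<bar>2^t * z - 2^t * x\<bar>" by (rule dT_le_abs)
    also have "\<dots> = 2^t * \<bar>z - x\<bar>"
    proof -
      have "(2::real)^t * z - 2^t * x = 2^t * (z - x)" by (simp add: algebra_simps)
      then show ?thesis by (simp add: abs_mult)
    qed
    also have "\<dots> \<le> 2^t * (1 / real M)" using zx by (intro mult_left_mono) simp_all
    also have "\<dots> \<le> 1 / 2^K"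
    proof -
      have "(2::real)^t * 2^K \<le> 2^N"
        using True M by (metis le_diff_conv2 power_add power_increasing_iff one_less_numeral_iff semiring_norm(76) one_le_numeral order_le_less le_add2 add_le_cancel_right diff_le_self le_trans)
      then show ?thesis using Mr by (simp add: field_simps)
    qed
    finally have "dT ((dbl ^^ t) z) ((dbl ^^ t) x) \<le> d0 / 2" using K by linarith
    moreover have "dT ((dbl ^^ t) x) b \<ge> d0" using x by blast
    moreover have "dT ((dbl ^^ t) z) b \<ge> dT ((dbl ^^ t) x) b - dT ((dbl ^^ t) z) ((dbl ^^ t) x)"
      using dT_ge_sub[of "(dbl ^^ t) z" b "(dbl ^^ t) x"] dT_sym[of "(dbl ^^ t) z" "(dbl ^^ t) x"]
        dT_triangle[of "(dbl ^^ t) x" b "(dbl ^^ t) z"] by linarith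
    ultimately show ?thesis using Md by linarith
  next
    case False
    show ?thesis
    proof (cases "t \<le> N")
      case True
      define s where "s = N - t"
      have sK: "s < K" using False True unfolding s_def by linarith
      have "(dbl ^^ s) ((dbl ^^ t) z) = tau" using zN True unfolding s_def
        by (metis funpow_add le_add_diff_inverse2 o_apply)
      show ?thesis
      proof (rule ccontr)
        assume "\<not> ?thesis"
        then have le: "dT ((dbl ^^ t) z) b \<le> 1 / real M" by simp
        have "dT tau ((dbl ^^ s) b) \<le> 2^s * dT ((dbl ^^ t) z) b"
          using dT_iter[of s "(dbl ^^ t) z" b] \<open>(dbl ^^ s) ((dbl ^^ t) z) = tau\<close> by simp
        also have "\<dots> \<le> 2^s * (1 / real M)" using le by (intro mult_left_mono) simp_all
        also have "\<dots> \<le> 2^K / real M" using sK Mp by (simp add: divide_right_mono)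
        finally show False using junc[OF sK] by simp
      qed
    next
      case False
      define k where "k = t - N"
      have kn: "k \<le> n" using t False unfolding k_def by simp
      have "(dbl ^^ t) z = (dbl ^^ k) tau" using zN False unfolding k_def
        by (metis funpow_add le_add_diff_inverse2 o_apply nat_le_linear)
      then show ?thesis using orb[OF kn] by simp
    qed
  qed
  have "(cellf M z, cellf M ((dbl ^^ (N + n)) z)) \<in> (Gg M b)\<^sup>*"
    using path_rtrancl[OF M(1,2) z01 far] by blast
  moreover have "(dbl ^^ (N + n)) z = (dbl ^^ n) tau"
  proof -
    have "(dbl ^^ (n + N)) z = (dbl ^^ n) ((dbl ^^ N) z)" by (simp add: funpow_add)
    then show ?thesis using zN by (simp add: add.commute)
  qed
  ultimately show ?thesis using cz unfolding c_def by simp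
qed

lemma backward_lemma:
  assumes M: "M = 2^N" "1 \<le> N" and y: "0 \<le> y" "y < 1" and c: "c < M"
    and far: "\<And>t. t \<le> N \<Longrightarrow> dT ((dbl ^^ t) ((y + real c) / real M)) b > 1 / real M"
  shows "(c, cellf M y) \<in> (Gg M b)\<^sup>*"
proof -
  define z where "z = (y + real c) / real M"
  have Mp: "0 < M" using M by simp
  have Mr: "real M = 2^N" using M by simp
  have cM': "real c + 1 \<le> real M" using c by linarith
  have z01: "0 \<le> z" "z < 1" using y cM' Mp unfolding z_def by (simp_all add: field_simps)
  have Mz: "real M * z = real c + y" unfolding z_def using Mp by simp
  have cz: "cellf M z = c" using Mz y by (intro cell_unique) simp_all
  have zN: "(dbl ^^ N) z = y"
  proof -
    have "(dbl ^^ N) z = frac (2^N * z)" using dbl_iter z01 by blast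
    also have "2^N * z = real c + y" using Mz Mr by simp
    finally show ?thesis using y by (simp add: frac_nat_add frac_eq)
  qed
  have "(cellf M z, cellf M ((dbl ^^ N) z)) \<in> (Gg M b)\<^sup>*"
    using path_rtrancl[OF M z01] far unfolding z_def by blast
  then show ?thesis using cz zN by simp
qed

lemma dbl_zero: "(dbl ^^ n) 0 = 0"
  by (induction n) (auto simp: dbl_def)

lemma orbit_closed: "(\<And>x. x \<in> A \<Longrightarrow> f x \<in> A) \<Longrightarrow> x \<in> A \<Longrightarrow> (f ^^ n) x \<in> A"
  by (induction n) auto

lemma frac_p1: "0 \<le> a \<Longrightarrow> a < 1 \<Longrightarrow> frac (a + 1) = a"
  by (simp add: frac_1_eq frac_eq)

lemma dbl_third: "(dbl ^^ n) (1/3) \<in> {1/3, 2/3}"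
proof (rule orbit_closed)
  have a: "dbl (1/3) = 2/3" by (simp add: dbl_def frac_eq)
  have "frac (1/3 + 1 :: real) = 1/3" by (rule frac_p1) auto
  then have b: "dbl (2/3) = 1/3" by (simp add: dbl_def)
  show "dbl x \<in> {1/3, 2/3}" if "x \<in> {1/3, 2/3}" for x using that by (elim insertE emptyE; hypsubst; simp only: a b; simp)
qed simp

lemma dbl_seventh: "(dbl ^^ n) (1/7) \<in> {1/7, 2/7, 4/7}"
proof (rule orbit_closed)
  have a: "dbl (1/7) = 2/7" by (simp add: dbl_def frac_eq)
  have b: "dbl (2/7) = 4/7" by (simp add: dbl_def frac_eq)
  have "frac (1/7 + 1 :: real) = 1/7" by (rule frac_p1) auto
  then have c: "dbl (4/7) = 1/7" by (simp add: dbl_def)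
  show "dbl x \<in> {1/7, 2/7, 4/7}" if "x \<in> {1/7, 2/7, 4/7}" for x using that by (elim insertE emptyE; hypsubst; simp only: a b c; simp)
qed simp

lemma dbl_quarter: "(dbl ^^ n) (1/4) \<in> {1/4, 1/2, 0}"
proof (rule orbit_closed)
  have a: "dbl (1/4) = 1/2" by (simp add: dbl_def frac_eq)
  have b: "dbl (1/2) = 0" by (simp add: dbl_def)
  have c: "dbl 0 = 0" by (simp add: dbl_def)
  show "dbl x \<in> {1/4, 1/2, 0}" if "x \<in> {1/4, 1/2, 0}" for x using that by (elim insertE emptyE; hypsubst; simp only: a b c; simp)
qed simp

lemma dbl_3quarter: "(dbl ^^ n) (3/4) \<in> {3/4, 1/2, 0}"
proof (rule orbit_closed)
  have "frac (1/2 + 1 :: real) = 1/2" by (rule frac_p1) auto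
  then have a: "dbl (3/4) = 1/2" by (simp add: dbl_def)
  have b: "dbl (1/2) = 0" by (simp add: dbl_def)
  have c: "dbl 0 = 0" by (simp add: dbl_def)
  show "dbl x \<in> {3/4, 1/2, 0}" if "x \<in> {3/4, 1/2, 0}" for x using that by (elim insertE emptyE; hypsubst; simp only: a b c; simp)
qed simp

lemma quarter_choice: "\<exists>q\<in>{1/4, 3/4::real}. \<forall>s. (dbl ^^ s) b \<noteq> q"
proof (rule ccontr)
  assume "\<not> ?thesis"
  then obtain s1 s2 where s1: "(dbl ^^ s1) b = 1/4" and s2: "(dbl ^^ s2) b = 3/4" by auto
  show False
  proof (cases "s1 \<le> s2")
    case True
    then have "(dbl ^^ s2) b = (dbl ^^ (s2 - s1)) ((dbl ^^ s1) b)"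
      by (metis funpow_add le_add_diff_inverse2 o_apply)
    then have "(3/4::real) \<in> {1/4, 1/2, 0}" using s1 s2 dbl_quarter by metis
    then show False by simp
  next
    case False
    then have "(dbl ^^ s1) b = (dbl ^^ (s1 - s2)) ((dbl ^^ s2) b)"
      by (metis funpow_add le_add_diff_inverse2 o_apply nat_le_linear)
    then have "(1/4::real) \<in> {3/4, 1/2, 0}" using s1 s2 dbl_3quarter by metis
    then show False by simp
  qed
qed

lemma finite_min_pos0:
  "(\<forall>s<(K::nat). (f s :: real) > 0) \<longrightarrow> (\<exists>g>0. \<forall>s<K. f s \<ge> g)"
proof (induction K)
  case 0 then show ?case by (intro impI exI[of _ 1]) simp
next
  case (Suc K)
  show ?case
  proof
    assume a: "\<forall>s<Suc K. f s > 0"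
    then obtain g where g: "g > 0" "\<forall>s<K. f s \<ge> g" using Suc by auto
    have "f K > 0" using a by simp
    then show "\<exists>g>0. \<forall>s<Suc K. f s \<ge> g" using g by (intro exI[of _ "min g (f K)"]) (auto simp: less_Suc_eq)
  qed
qed

lemma finite_min_pos:
  assumes "\<And>s. s < (K::nat) \<Longrightarrow> (f s :: real) > 0"
  shows "\<exists>g>0. \<forall>s<K. f s \<ge> g"
  using finite_min_pos0[of K f] assms by blast

lemma exists_big_pow: "\<exists>N\<ge>N1. (2::real)^N > B"
proof -
  obtain n where n: "B < (2::real)^n" using real_arch_pow[of 2 B] by auto
  have "(2::real)^n \<le> 2^(max n N1)" by (rule power_increasing) auto
  then show ?thesis using n by (intro exI[of _ "max n N1"]) (auto simp del: power_increasing_iff)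
qed

lemma exists_K: assumes "d > (0::real)" shows "\<exists>K\<ge>1. 1 / 2^K \<le> d"
proof -
  obtain K where K: "1/d < (2::real)^K" using real_arch_pow[of 2 "1/d"] by auto
  have "(2::real)^K \<le> 2^(max K 1)" by (rule power_increasing) auto
  then have "1/d < 2^(max K 1)" using K by linarith
  then have "1 / 2^(max K 1) \<le> d" using assms by (simp add: field_simps)
  then show ?thesis by (intro exI[of _ "max K 1"]) auto
qed

lemma dT_zero_right: "0 \<le> u \<Longrightarrow> u < 1 \<Longrightarrow> dT u 0 = min u (1 - u)"
  using dT_01[of u 0] by simp

definition good_graph :: "real \<Rightarrow> real \<Rightarrow> nat \<Rightarrow> nat \<Rightarrow> bool" where
  "good_graph b d0 M h \<longleftrightarrow> (\<exists>N. M = 2^N \<and> 2 \<le> N) \<and> h < M \<and> h \<notin> Rset M b \<and>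
     (\<forall>y. 0 \<le> y \<longrightarrow> y < 1 \<longrightarrow> (\<forall>n. dT ((dbl ^^ n) y) b \<ge> d0) \<longrightarrow> cellf M y \<in> SCC (Gg M b) h) \<and>
     (\<exists>n0. \<forall>n\<ge>n0. (h, h) \<in> restr (Gg M b) (SCC (Gg M b) h) ^^ n)"

lemma dbl_q1: "dbl (1/4) = 1/2" by (simp add: dbl_def frac_eq)
lemma dbl_q3: "dbl (3/4) = 1/2"
proof -
  have "frac (1/2 + 1 :: real) = 1/2" by (rule frac_p1) auto
  then show ?thesis by (simp add: dbl_def)
qed
lemma dbl_half: "dbl (1/2) = 0" by (simp add: dbl_def)

lemma dbl_iter2: "(dbl ^^ 2) x = dbl (dbl x)"
  by (simp add: numeral_2_eq_2)

lemma small_iters: "k \<le> (2::nat) \<Longrightarrow> k = 0 \<or> k = 1 \<or> k = 2" by auto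

lemma common_constants:
  fixes d0 g :: real
  assumes "0 < d0" "0 < g"
  shows "\<exists>K N. 1 \<le> K \<and> 1 / 2^K \<le> d0 / 2 \<and> K \<le> N \<and> 4 \<le> N \<and>
     (2::real)^K + 1 < g * 2^N \<and> 2 < d0 * 2^N"
proof -
  obtain K where K: "1 \<le> K" "1 / 2^K \<le> d0 / 2" using exists_K[of "d0/2"] assms by auto
  obtain N where N: "N \<ge> max K 4" "(2::real)^N > (2^K + 1) / g + 2 / d0"
    using exists_big_pow by blast
  have "(2^K + 1) / g < 2^N" "2 / d0 < 2^N" using N(2) assms
    by (smt (verit) divide_nonneg_pos zero_le_power zero_le_numeral one_le_power)+
  then have "(2::real)^K + 1 < g * 2^N" "2 < d0 * 2^N" using assms by (simp_all add: field_simps)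
  then show ?thesis using K N by (intro exI[of _ K] exI[of _ N]) auto
qed

lemma pow_half: assumes "t < N" shows "(2::real)^t * 2 \<le> 2^N"
proof -
  have "(2::real)^t * 2 = 2^(Suc t)" by simp
  also have "\<dots> \<le> 2^N" using assms by (intro power_increasing) auto
  finally show ?thesis .
qed

lemma choose_N:
  fixes d0 g :: real
  assumes "0 < d0" "0 < g"
  shows "\<exists>N. N \<ge> max K 4 \<and> (2::real)^K + 1 < g * 2^N \<and> 2 < d0 * 2^N"
proof -
  obtain N where N: "N \<ge> max K 4" "(2::real)^N > (2^K + 1) / g + 2 / d0"
    using exists_big_pow by blast
  have "(2^K + 1) / g < 2^N" "2 / d0 < 2^N" using N(2) assms
    by (smt (verit) divide_nonneg_pos zero_le_power zero_le_numeral one_le_power)+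
  then have "(2::real)^K + 1 < g * 2^N" "2 < d0 * 2^N" using assms by (simp_all add: field_simps)
  then show ?thesis using N by blast
qed

lemma dbl_q: "q \<in> {1/4, 3/4} \<Longrightarrow> dbl q = 1/2"
  by (elim insertE emptyE; hypsubst; simp only: dbl_q1 dbl_q3)

lemma case_hi:
  assumes b: "1/2 < b" "b < 1" and d0: "0 < d0"
  shows "\<exists>M h. good_graph b d0 M h"
proof -
  obtain q where q: "q \<in> {1/4, 3/4}" "\<forall>s. (dbl ^^ s) b \<noteq> q" using quarter_choice by blast
  have b01: "0 \<le> b" "b < 1" using b by auto
  have q01: "0 \<le> q" "q < 1" using q by auto
  have Tb: "0 \<le> (dbl ^^ s) b \<and> (dbl ^^ s) b < 1" for s using dbl_iter_range b01 by blast
  obtain K where K: "1 \<le> K" "1 / 2^K \<le> d0 / 2" using exists_K[of "d0/2"] d0 by auto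
  have "dT q ((dbl ^^ s) b) > 0" if "s < K" for s
    using dT_pos[OF q01 conjunct1[OF Tb] conjunct2[OF Tb]] q(2) by metis
  then obtain g1 where g1: "g1 > 0" "\<forall>s<K. dT q ((dbl ^^ s) b) \<ge> g1"
    using finite_min_pos[of K "\<lambda>s. dT q ((dbl ^^ s) b)"] by blast
  have p1: "dT (1/2) b > 0" using b by (intro dT_pos) auto
  have p0: "dT 0 b > 0" using b by (intro dT_pos) auto
  define g where "g = min (min g1 (min (b - 1/2) (1 - b))) (min (dT (1/2) b) (dT 0 b))"
  have gpos: "g > 0" unfolding g_def using g1 p1 p0 b by auto
  obtain N where N: "N \<ge> max K 4" "(2::real)^K + 1 < g * 2^N" "2 < d0 * 2^N"
    using choose_N[OF d0 gpos] by blast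
  define M where "M = (2::nat)^N"
  have Mr: "real M = 2^N" unfolding M_def by simp
  have N1: "1 \<le> N" "2 \<le> N" "K \<le> N" using N by auto
  have Mp: "0 < M" unfolding M_def by simp
  have i1: "1 / real M < d0 / 2" using N(3) Mr Mp by (simp add: field_simps)
  have i2: "2^K / real M < g" using N(2) Mr Mp by (simp add: field_simps)
  have "1 / real M \<le> 2^K / real M" using Mp by (simp add: divide_right_mono)
  then have i3: "1 / real M < g" using i2 by linarith
  define G where "G = Gg M b"
  have cell0: "cellf M 0 = 0" by (simp add: cellf_def)
  have d0b: "dT 0 b > 1 / real M" using i3 unfolding g_def by linarith
  have h_notR: "0 \<notin> Rset M b" using not_R[of 0 M b] d0b Mp cell0 by simp
  have fwd: "(cellf M y, 0) \<in> G\<^sup>*"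
    if y: "0 \<le> y" "y < 1" "\<And>n. dT ((dbl ^^ n) y) b \<ge> d0" for y
  proof -
    have q2: "(dbl ^^ 2) q = 0" by (simp only: dbl_iter2 dbl_q[OF q(1)] dbl_half)
    have junc: "dT q ((dbl ^^ s) b) > 2^K / real M" if "s < K" for s
      using g1 that i2 unfolding g_def by fastforce
    have orb: "dT ((dbl ^^ k) q) b > 1 / real M" if "k \<le> 2" for k
    proof -
      have A: "dT ((dbl ^^ 0) q) b > 1 / real M" using junc[of 0] K i2 i3 g1 unfolding g_def by fastforce
      have p: "dT (1/2) b > 1 / real M" using i3 unfolding g_def by linarith
      have "(dbl ^^ 1) q = 1/2" using dbl_q[OF q(1)] by simp
      then have B: "dT ((dbl ^^ 1) q) b > 1 / real M" using p by (simp only:)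
      have C: "dT ((dbl ^^ 2) q) b > 1 / real M" using d0b by (simp only: q2)
      show ?thesis using small_iters[OF that] A B C by metis
    qed
    have "(cellf M y, cellf M ((dbl ^^ 2) q)) \<in> (Gg M b)\<^sup>*"
      by (rule forward_lemma[OF M_def N1(1) N1(3) y K(2) i1 q01 junc orb])
    then show ?thesis using q2 cell0 unfolding G_def by simp
  qed
  have bwd: "(0, cellf M y) \<in> G\<^sup>*"
    if y: "0 \<le> y" "y < 1" "\<And>n. dT ((dbl ^^ n) y) b \<ge> d0" for y
  proof -
    have far: "dT ((dbl ^^ t) ((y + real 0) / real M)) b > 1 / real M" if t: "t \<le> N" for t
    proof -
      have z01: "0 \<le> y / real M" "y / real M < 1" using y Mp Mr
        by (simp_all add: field_simps) (smt (verit) one_le_power)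
      have it: "(dbl ^^ t) ((y + real 0) / real M) = frac (2^t * (y / real M))"
        using dbl_iter[OF z01] by simp
      show ?thesis
      proof (cases "t < N")
        case True
        have "y / real M \<le> 1 / real M" using y Mp by (intro divide_right_mono) auto
        then have "2^t * (y / real M) \<le> 2^t * (1 / real M)" by (intro mult_left_mono) auto
        also have "\<dots> \<le> 1/2" using pow_half[OF True] Mr by (simp add: field_simps)
        finally have u1: "2^t * (y / real M) \<le> 1/2" .
        have u0: "0 \<le> 2^t * (y / real M)" using y Mp by simp
        define u where "u = 2^t * (y / real M)"
        have v0: "0 \<le> u" "u \<le> 1/2" using u0 u1 unfolding u_def by auto
        have fu: "frac u = u" using v0 by (simp add: frac_eq)
        have "dT u b = min \<bar>u - b\<bar> (1 - \<bar>u - b\<bar>)" using v0 b by (intro dT_01) auto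
        moreover have "\<bar>u - b\<bar> = b - u" using v0 b by simp
        ultimately have "dT u b \<ge> g" using v0 b unfolding g_def by auto
        then show ?thesis using it fu i3 unfolding u_def by simp
      next
        case False
        then have "t = N" using t by simp
        then have "(dbl ^^ t) ((y + real 0) / real M) = y" using it Mr Mp y by (simp add: frac_eq)
        then show ?thesis using y(3)[of 0] i1 d0 by simp
      qed
    qed
    have "(0, cellf M y) \<in> (Gg M b)\<^sup>*"
      using backward_lemma[OF M_def N1(1) y(1,2) Mp far] by simp
    then show ?thesis unfolding G_def .
  qed
  have loop: "(0, 0) \<in> G" using Mp h_notR unfolding G_def Gg_def Eg_def by simp
  have "(0::nat) \<in> SCC G 0" by (rule h_in_SCC)
  then have l1: "(0, 0) \<in> restr G (SCC G 0)" using loop by (simp add: restr_def)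
  have loops: "\<forall>n\<ge>0. (0, 0) \<in> restr G (SCC G 0) ^^ n"
  proof (intro allI impI)
    fix n :: nat
    show "(0, 0) \<in> restr G (SCC G 0) ^^ n" by (rule loops_from_loop[OF l1])
  qed
  have "good_graph b d0 M 0"
    unfolding good_graph_def
  proof (intro conjI allI impI)
    show "\<exists>N. M = 2^N \<and> 2 \<le> N" using M_def N1 by blast
    show "0 < M" by (rule Mp)
    show "0 \<notin> Rset M b" by (rule h_notR)
    fix y assume "0 \<le> y" "y < 1" "\<forall>n. d0 \<le> dT ((dbl ^^ n) y) b"
    then show "cellf M y \<in> SCC (Gg M b) 0" using fwd bwd unfolding SCC_def G_def by auto
  next
    show "\<exists>n0. \<forall>n\<ge>n0. (0, 0) \<in> restr (Gg M b) (SCC (Gg M b) 0) ^^ n" using loops unfolding G_def by blast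
  qed
  then show ?thesis by blast
qed

lemma dbl_tau: assumes "q \<in> {1/4, 3/4}" "(1::real) \<le> M"
  shows "dbl (q - 1/(4*M)) = 1/2 - 1/(2*M)"
proof -
  have m: "0 < 1/(2*M)" "1/(2*M) \<le> 1/2" using assms(2) by (simp_all add: field_simps)
  have "q = 1/4 \<or> q = 3/4" using assms(1) by simp
  then show ?thesis
  proof
    assume "q = 1/4"
    have f: "0 \<le> 1/2 - 1/(2*M)" "1/2 - 1/(2*M) < 1" using m by linarith+
    have fr: "frac (1/2 - 1/(2*M)) = 1/2 - 1/(2*M)" using f by (simp add: frac_eq)
    have eq: "2 * (q - 1/(4*M)) = 1/2 - 1/(2*M)" using \<open>q = 1/4\<close> by (simp add: field_simps)
    show ?thesis unfolding dbl_def by (simp only: eq fr)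
  next
    assume "q = 3/4"
    have f: "0 \<le> 1/2 - 1/(2*M)" "1/2 - 1/(2*M) < 1" using m by linarith+
    have fr: "frac ((1/2 - 1/(2*M)) + 1) = 1/2 - 1/(2*M)" using f by (intro frac_p1)
    have eq: "2 * (q - 1/(4*M)) = (1/2 - 1/(2*M)) + 1" using \<open>q = 3/4\<close> by (simp add: field_simps)
    show ?thesis unfolding dbl_def by (simp only: eq fr)
  qed
qed

lemma dbl_tau2: assumes "(1::real) \<le> M" shows "dbl (1/2 - 1/(2*M)) = 1 - 1/M"
proof -
  have "2 * (1/2 - 1/(2*M)) = 1 - 1/M" using assms by (simp add: field_simps)
  moreover have "0 \<le> 1 - 1/M" "1 - 1/M < 1" using assms by (simp_all add: field_simps)
  ultimately show ?thesis by (simp add: dbl_def frac_eq)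
qed

lemma case_lo:
  assumes b: "0 < b" "b < 1/2" and d0: "0 < d0"
  shows "\<exists>M h. good_graph b d0 M h"
proof -
  obtain q where q: "q \<in> {1/4, 3/4}" "\<forall>s. (dbl ^^ s) b \<noteq> q" using quarter_choice by blast
  have b01: "0 \<le> b" "b < 1" using b by auto
  have q01: "0 \<le> q" "q < 1" using q by auto
  have Tb: "0 \<le> (dbl ^^ s) b \<and> (dbl ^^ s) b < 1" for s using dbl_iter_range b01 by blast
  obtain K where K: "1 \<le> K" "1 / 2^K \<le> d0 / 2" using exists_K[of "d0/2"] d0 by auto
  have "dT q ((dbl ^^ s) b) > 0" if "s < K" for s
    using dT_pos[OF q01 conjunct1[OF Tb] conjunct2[OF Tb]] q(2) by metis
  then obtain g1 where g1: "g1 > 0" "\<forall>s<K. dT q ((dbl ^^ s) b) \<ge> g1"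
    using finite_min_pos[of K "\<lambda>s. dT q ((dbl ^^ s) b)"] by blast
  have p1: "dT (1/2) b > 0" using b by (intro dT_pos) auto
  have p0: "dT 0 b > 0" using b by (intro dT_pos) auto
  define g where "g = min (min g1 (min (1/2 - b) b)) (min (dT (1/2) b) (dT 0 b))"
  have gpos: "g > 0" unfolding g_def using g1 p1 p0 b by auto
  obtain N where N: "N \<ge> max K 4" "(2::real)^K + 1 < g * 2^N" "2 < d0 * 2^N"
    using choose_N[OF d0 gpos] by blast
  define M where "M = (2::nat)^N"
  have Mr: "real M = 2^N" unfolding M_def by simp
  have N1: "1 \<le> N" "2 \<le> N" "K \<le> N" using N by auto
  have Mp: "0 < M" unfolding M_def by simp
  have M1: "(1::real) \<le> real M" using Mp by simp
  have i1: "1 / real M < d0 / 2" using N(3) Mr Mp by (simp add: field_simps)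
  have i2': "(2^K + 1) / real M < g" using N(2) Mr Mp by (simp add: field_simps)
  have "(2::real)^K \<ge> 2" using K(1) by (metis power_increasing power_one_right numeral_le_one_iff semiring_norm(69) one_le_numeral)
  then have "3 / real M \<le> (2^K + 1) / real M" using Mp by (intro divide_right_mono) auto
  then have i4: "3 / real M < g" using i2' by linarith
  have i5: "3 / real M = 3 * (1 / real M)" by simp
  have i6: "0 < 1 / real M" using Mp by simp
  define G where "G = Gg M b"
  define tau where "tau = q - 1 / (4 * real M)"
  define hp where "hp = 1 - 1 / real M"
  have hp01: "0 \<le> hp" "hp < 1" unfolding hp_def using M1 by (simp_all add: field_simps)
  have cellh: "cellf M hp = M - 1"
  proof (rule cell_unique)
    show "real (M - 1) \<le> real M * hp" "real M * hp < real (M - 1) + 1"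
      unfolding hp_def using Mp by (simp_all add: field_simps of_nat_diff)
  qed
  have dhp: "dT hp b > 1 / real M"
  proof -
    have "dT hp 0 \<le> \<bar>hp - 0 - of_int 1\<bar>" by (rule dT_le_int)
    then have "dT hp 0 \<le> 1 / real M" unfolding hp_def using M1 by simp
    moreover have "dT 0 b \<le> dT 0 hp + dT hp b" by (rule dT_triangle)
    moreover have "dT 0 b \<ge> g" unfolding g_def by simp
    ultimately show ?thesis using i4 i5 i6 dT_sym[of 0 hp] by linarith
  qed
  have h_notR: "M - 1 \<notin> Rset M b" using not_R[OF hp01 Mp dhp] cellh by simp
  have fwd: "(cellf M y, M - 1) \<in> G\<^sup>*"
    if y: "0 \<le> y" "y < 1" "\<And>n. dT ((dbl ^^ n) y) b \<ge> d0" for y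
  proof -
    have qq: "1/4 \<le> q" "q \<le> 3/4" using q(1) by auto
    have "1/(4*real M) \<le> 1/4" "0 < 1/(4*real M)" using M1 by (simp_all add: field_simps)
    then have tau01: "0 \<le> tau" "tau < 1" using qq unfolding tau_def by linarith+
    have t1: "(dbl ^^ 1) tau = 1/2 - 1/(2 * real M)" using dbl_tau[OF q(1) M1] unfolding tau_def by simp
    have t2: "(dbl ^^ 2) tau = hp" using dbl_tau[OF q(1) M1] dbl_tau2[OF M1] unfolding tau_def hp_def
      by (simp only: dbl_iter2)
    have qt: "dT q tau \<le> 1 / (4 * real M)"
      using dT_le_abs[of q tau] Mp unfolding tau_def by simp
    have junc: "dT tau ((dbl ^^ s) b) > 2^K / real M" if "s < K" for s
    proof -
      have "dT q ((dbl ^^ s) b) \<le> dT q tau + dT tau ((dbl ^^ s) b)" by (rule dT_triangle)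
      moreover have "dT q ((dbl ^^ s) b) \<ge> g" using g1 that unfolding g_def by fastforce
      moreover have "1 / (4 * real M) \<le> 1 / real M" using Mp by (simp add: field_simps)
      ultimately have "dT tau ((dbl ^^ s) b) \<ge> g - 1 / real M" using qt by linarith
      moreover have "2^K / real M + 1 / real M < g" using i2' by (simp add: add_divide_distrib)
      ultimately show ?thesis by linarith
    qed
    have orb: "dT ((dbl ^^ k) tau) b > 1 / real M" if "k \<le> 2" for k
    proof -
      have "1 / real M \<le> 2^K / real M" using Mp by (simp add: divide_right_mono)
      then have A: "dT ((dbl ^^ 0) tau) b > 1 / real M" using junc[of 0] K by simp
      have "dT (1/2) b \<le> dT (1/2) (1/2 - 1/(2 * real M)) + dT (1/2 - 1/(2 * real M)) b" by (rule dT_triangle)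
      moreover have "dT (1/2) (1/2 - 1/(2 * real M)) \<le> 1 / real M"
        using dT_le_abs[of "1/2" "1/2 - 1/(2 * real M)"] Mp by (simp add: field_simps)
      moreover have "dT (1/2) b \<ge> g" unfolding g_def by simp
      ultimately have "dT (1/2 - 1/(2 * real M)) b > 1 / real M" using i4 i5 i6 by linarith
      then have B: "dT ((dbl ^^ 1) tau) b > 1 / real M" by (simp only: t1)
      have C: "dT ((dbl ^^ 2) tau) b > 1 / real M" using dhp by (simp only: t2)
      show ?thesis using small_iters[OF that] A B C by metis
    qed
    have "(cellf M y, cellf M ((dbl ^^ 2) tau)) \<in> (Gg M b)\<^sup>*"
      by (rule forward_lemma[OF M_def N1(1) N1(3) y K(2) i1 tau01 junc orb])
    then show ?thesis using t2 cellh unfolding G_def by simp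
  qed
  have bwd: "(M - 1, cellf M y) \<in> G\<^sup>*"
    if y: "0 \<le> y" "y < 1" "\<And>n. dT ((dbl ^^ n) y) b \<ge> d0" for y
  proof -
    define z where "z = (y + real (M - 1)) / real M"
    have z01: "0 \<le> z" "z < 1" unfolding z_def using y Mp by (simp_all add: field_simps of_nat_diff)
    have it: "(dbl ^^ t) z = 1 - 2^t * (1 - y) / real M" if t: "t \<le> N" for t
    proof -
      define w where "w = 2^t * (1 - y) / real M"
      have w0: "0 < w" unfolding w_def using y Mp by simp
      have "(2::real)^t \<le> 2^N" using t by (intro power_increasing) auto
      then have "2^t * (1 - y) \<le> 2^N * 1" using y by (intro mult_mono) auto
      then have w1: "w \<le> 1" unfolding w_def using Mr Mp by (simp add: field_simps)
      have "2^t * z = 2^t - w" unfolding z_def w_def using Mp by (simp add: field_simps of_nat_diff)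
      moreover have "frac (2^t - w) = 1 - w"
      proof (subst frac_unique_iff, intro conjI)
        have "(2::real)^t - w - (1 - w) = of_int (2^t - 1)" by simp
        then show "(2::real)^t - w - (1 - w) \<in> \<int>" by (metis Ints_of_int)
        show "0 \<le> 1 - w" "1 - w < 1" using w0 w1 by auto
      qed
      ultimately show ?thesis using dbl_iter[OF z01] unfolding w_def by simp
    qed
    have far: "dT ((dbl ^^ t) ((y + real (M - 1)) / real M)) b > 1 / real M" if t: "t \<le> N" for t
    proof (cases "t < N")
      case True
      define u where "u = 1 - 2^t * (1 - y) / real M"
      have "2^t * (1 - y) / real M \<le> 2^t * 1 / real M" using y Mp by (intro divide_right_mono mult_left_mono) auto
      also have "\<dots> \<le> 1/2" using pow_half[OF True] Mr by (simp add: field_simps)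
      finally have v0: "1/2 \<le> u" "u < 1" unfolding u_def using y Mp by auto
      have "dT u b = min \<bar>u - b\<bar> (1 - \<bar>u - b\<bar>)" using v0 b by (intro dT_01) auto
      moreover have "\<bar>u - b\<bar> = u - b" using v0 b by simp
      ultimately have "dT u b \<ge> g" using v0 b unfolding g_def by auto
      moreover have "(dbl ^^ t) ((y + real (M - 1)) / real M) = u"
        using it[OF t] unfolding u_def z_def .
      ultimately have "dT ((dbl ^^ t) ((y + real (M - 1)) / real M)) b \<ge> g" by simp
      then show ?thesis using i4 i5 i6 by linarith
    next
      case False
      then have "t = N" using t by simp
      then have "(dbl ^^ t) ((y + real (M - 1)) / real M) = y" using it[OF t] Mr Mp unfolding z_def by simp
      then show ?thesis using y(3)[of 0] i1 d0 by simp
    qed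
    have "M - 1 < M" using Mp by simp
    then have "(M - 1, cellf M y) \<in> (Gg M b)\<^sup>*"
      using backward_lemma[OF M_def N1(1) y(1,2) _ far] by simp
    then show ?thesis unfolding G_def .
  qed
  have loop: "(M - 1, M - 1) \<in> G"
  proof -
    have "(2 * (M - 1) + 1) mod M = M - 1"
    proof -
      have e: "2 * (M - 1) + 1 = (M - 1) + M" using Mp by simp
      have "(2 * (M - 1) + 1) mod M = ((M - 1) + M) mod M" by (simp only: e)
      also have "\<dots> = (M - 1) mod M" by (rule mod_add_self2)
      also have "\<dots> = M - 1" using Mp by simp
      finally show ?thesis .
    qed
    then show ?thesis using Mp h_notR unfolding G_def Gg_def Eg_def by simp
  qed
  have "M - 1 \<in> SCC G (M - 1)" by (rule h_in_SCC)
  then have l1: "(M - 1, M - 1) \<in> restr G (SCC G (M - 1))" using loop by (simp add: restr_def)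
  have loops: "\<forall>n\<ge>0. (M - 1, M - 1) \<in> restr G (SCC G (M - 1)) ^^ n"
  proof (intro allI impI)
    fix n :: nat
    show "(M - 1, M - 1) \<in> restr G (SCC G (M - 1)) ^^ n" by (rule loops_from_loop[OF l1])
  qed
  have "good_graph b d0 M (M - 1)"
    unfolding good_graph_def
  proof (intro conjI allI impI)
    show "\<exists>N. M = 2^N \<and> 2 \<le> N" using M_def N1 by blast
    show "M - 1 < M" using Mp by simp
    show "M - 1 \<notin> Rset M b" by (rule h_notR)
    fix y assume "0 \<le> y" "y < 1" "\<forall>n. d0 \<le> dT ((dbl ^^ n) y) b"
    then show "cellf M y \<in> SCC (Gg M b) (M - 1)" using fwd bwd unfolding SCC_def G_def by auto
  next
    show "\<exists>n0. \<forall>n\<ge>n0. (M - 1, M - 1) \<in> restr (Gg M b) (SCC (Gg M b) (M - 1)) ^^ n" using loops unfolding G_def by blast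
  qed
  then show ?thesis by blast
qed

lemma iter_N_shift: assumes M: "M = 2^N" and y: "0 \<le> y" "y < 1" and c: "c < M"
  shows "(dbl ^^ N) ((y + real c) / real M) = y"
proof -
  define z where "z = (y + real c) / real M"
  have Mp: "0 < M" using M by simp
  have Mr: "real M = 2^N" using M by simp
  have cM': "real c + 1 \<le> real M" using c by linarith
  have z01: "0 \<le> z" "z < 1" using y cM' Mp unfolding z_def by (simp_all add: field_simps)
  have Mz: "real M * z = real c + y" unfolding z_def using Mp by simp
  have "(dbl ^^ N) z = frac (2^N * z)" using dbl_iter z01 by blast
  also have "2^N * z = real c + y" using Mz Mr by simp
  finally show ?thesis using y unfolding z_def by (simp add: frac_nat_add frac_eq)
qed

lemma third_far: "dT ((dbl ^^ n) (1/3)) 0 \<ge> 1/3"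
proof -
  have "(dbl ^^ n) (1/3) = 1/3 \<or> (dbl ^^ n) (1/3) = 2/3" using dbl_third[of n] by simp
  then show ?thesis
  proof
    assume e: "(dbl ^^ n) (1/3) = 1/3"
    have "dT (1/3) 0 = 1/3" using dT_zero_right[of "1/3"] by simp
    then show ?thesis by (simp only: e)
  next
    assume e: "(dbl ^^ n) (1/3) = 2/3"
    have "dT (2/3) 0 = 1/3" using dT_zero_right[of "2/3"] by simp
    then show ?thesis by (simp only: e) (simp_all)?
  qed
qed

lemma seventh_far: "dT ((dbl ^^ n) (1/7)) 0 \<ge> 1/7"
proof -
  have "(dbl ^^ n) (1/7) = 1/7 \<or> (dbl ^^ n) (1/7) = 2/7 \<or> (dbl ^^ n) (1/7) = 4/7" using dbl_seventh[of n] by simp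
  then show ?thesis
  proof (elim disjE)
    assume e: "(dbl ^^ n) (1/7) = 1/7"
    have "dT (1/7) 0 = 1/7" using dT_zero_right[of "1/7"] by simp
    then show ?thesis by (simp only: e)
  next
    assume e: "(dbl ^^ n) (1/7) = 2/7"
    have "dT (2/7) 0 = 2/7" using dT_zero_right[of "2/7"] by simp
    then show ?thesis by (simp only: e) (simp_all)?
  next
    assume e: "(dbl ^^ n) (1/7) = 4/7"
    have "dT (4/7) 0 = 3/7" using dT_zero_right[of "4/7"] by simp
    then show ?thesis by (simp only: e) (simp_all)?
  qed
qed

lemma dbl2_third: "(dbl ^^ 2) (1/3) = 1/3"
proof -
  have a: "dbl (1/3) = 2/3" by (simp add: dbl_def frac_eq)
  have "frac (1/3 + 1 :: real) = 1/3" by (rule frac_p1) auto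
  then have b: "dbl (2/3) = 1/3" by (simp add: dbl_def)
  show ?thesis by (simp only: dbl_iter2 a b)
qed

lemma dbl3_seventh: "(dbl ^^ 3) (1/7) = 1/7"
proof -
  have a: "dbl (1/7) = 2/7" by (simp add: dbl_def frac_eq)
  have b: "dbl (2/7) = 4/7" by (simp add: dbl_def frac_eq)
  have "frac (1/7 + 1 :: real) = 1/7" by (rule frac_p1) auto
  then have c: "dbl (4/7) = 1/7" by (simp add: dbl_def)
  have "(dbl ^^ 3) (1/7) = dbl (dbl (dbl (1/7)))" by (simp add: numeral_3_eq_3)
  then show ?thesis by (simp only: a b c)
qed

lemma case_zero:
  assumes d0: "0 < d0" "d0 \<le> 1/8"
  shows "\<exists>M h. good_graph 0 d0 M h"
proof -
  define b :: real where "b = 0"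
  obtain K where K: "1 \<le> K" "1 / 2^K \<le> d0 / 2" using exists_K[of "d0/2"] d0 by auto
  have g3: "(0::real) < 1/3" by simp
  obtain N where N: "N \<ge> max K 4" "(2::real)^K + 1 < 1/3 * 2^N" "2 < d0 * 2^N"
    using choose_N[OF d0(1) g3] by blast
  define M where "M = (2::nat)^N"
  have Mr: "real M = 2^N" unfolding M_def by simp
  have N1: "1 \<le> N" "2 \<le> N" "K \<le> N" "4 \<le> N" using N by auto
  have Mp: "0 < M" unfolding M_def by simp
  have M16: "(16::real) \<le> real M"
  proof -
    have "(2::real)^4 \<le> 2^N" using N1(4) by (intro power_increasing) auto
    then show ?thesis using Mr by simp
  qed
  have i1: "1 / real M < d0 / 2" using N(3) Mr Mp by (simp add: field_simps)
  have i2: "2^K / real M < 1/3" using N(2) Mr Mp by (simp add: field_simps)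
  have i3: "1 / real M \<le> 1/16" using M16 by (simp add: field_simps)
  have i6: "0 < 1 / real M" using Mp by simp
  define G where "G = Gg M b"
  define h where "h = cellf M (1/3)"
  define h7 where "h7 = cellf M (1/7)"
  have hM: "h < M" unfolding h_def by (rule cell_lt) (use Mp in auto)
  have h7M: "h7 < M" unfolding h7_def by (rule cell_lt) (use Mp in auto)
  have t0: "dT (1/3) 0 \<ge> 1/3" using third_far[of 0] by simp
  have t1: "dT (1/3) 0 > 1 / real M" using t0 i3 by linarith
  have h_notR: "h \<notin> Rset M b" unfolding h_def b_def
    using not_R[OF _ _ Mp t1] by simp
  have fwd: "(cellf M y, h) \<in> G\<^sup>*"
    if y: "0 \<le> y" "y < 1" "\<And>n. dT ((dbl ^^ n) y) b \<ge> d0" for y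
  proof -
    have junc: "dT (1/3) ((dbl ^^ s) b) > 2^K / real M" if "s < K" for s
    proof -
      have "dT (1/3) ((dbl ^^ s) b) = dT (1/3) 0" unfolding b_def dbl_zero ..
      then show ?thesis using t0 i2 by linarith
    qed
    have orb: "dT ((dbl ^^ k) (1/3)) b > 1 / real M" if "k \<le> 0" for k
    proof -
      have "dT ((dbl ^^ k) (1/3)) b = dT (1/3) 0" using that unfolding b_def by simp
      then show ?thesis using t1 by linarith
    qed
    have "(cellf M y, cellf M ((dbl ^^ 0) (1/3))) \<in> (Gg M b)\<^sup>*"
      by (rule forward_lemma[OF M_def N1(1) N1(3) y K(2) i1 _ _ junc orb]) auto
    then show ?thesis unfolding G_def h_def by simp
  qed
  have bwd: "(h, cellf M y) \<in> G\<^sup>*"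
    if y: "0 \<le> y" "y < 1" "\<And>n. dT ((dbl ^^ n) y) b \<ge> d0" for y
  proof -
    define z where "z = (y + real h) / real M"
    have hM': "real h + 1 \<le> real M" using hM by linarith
    have z01: "0 \<le> z" "z < 1" unfolding z_def using y hM' Mp
      by (simp_all add: field_simps)
    have hb: "real h \<le> real M * (1/3)" "real M * (1/3) < real h + 1"
      using cell_bounds[of "1/3" M] unfolding h_def by auto
    have zc: "\<bar>z - 1/3\<bar> < 1 / real M"
    proof -
      have "real M * z = y + real h" unfolding z_def using Mp by simp
      then have "\<bar>real M * z - real M * (1/3)\<bar> < 1" using hb y by linarith
      moreover have "real M * z - real M * (1/3) = real M * (z - 1/3)" by (simp add: algebra_simps)
      ultimately have "real M * \<bar>z - 1/3\<bar> < 1" by (simp add: abs_mult)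
      then show ?thesis using Mp by (simp add: field_simps)
    qed
    have zN: "(dbl ^^ N) z = y" unfolding z_def by (rule iter_N_shift[OF M_def y(1,2) hM])
    have far: "dT ((dbl ^^ t) z) b > 1 / real M" if t: "t \<le> N" for t
    proof (cases "t + 2 \<le> N")
      case True
      have "dT ((dbl ^^ t) z) ((dbl ^^ t) (1/3)) \<le> 2^t * dT z (1/3)" by (rule dT_iter)
      also have "\<dots> \<le> 2^t * \<bar>z - 1/3\<bar>" by (intro mult_left_mono dT_le_abs) auto
      also have "\<dots> \<le> 2^t * (1 / real M)" using zc by (intro mult_left_mono) auto
      also have "\<dots> \<le> 1/4"
      proof -
        have "(2::real)^t * 2^2 = 2^(t+2)" by (simp add: power_add)
        also have "\<dots> \<le> 2^N" using True by (intro power_increasing) auto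
        finally show ?thesis using Mr by (simp add: field_simps)
      qed
      finally have a: "dT ((dbl ^^ t) z) ((dbl ^^ t) (1/3)) \<le> 1/4" .
      have "dT ((dbl ^^ t) (1/3)) 0 \<le> dT ((dbl ^^ t) (1/3)) ((dbl ^^ t) z) + dT ((dbl ^^ t) z) 0"
        by (rule dT_triangle)
      then show ?thesis using a third_far[of t] dT_sym[of "(dbl ^^ t) z" "(dbl ^^ t) (1/3)"] i3
        unfolding b_def by linarith
    next
      case False
      show ?thesis
      proof (cases "t = N")
        case True
        then show ?thesis using zN y(3)[of 0] i1 d0 by simp
      next
        case False
        then have tN: "Suc t = N" using \<open>\<not> t + 2 \<le> N\<close> t by simp
        have "(dbl ^^ N) z = dbl ((dbl ^^ t) z)" using tN by auto
        then have "dT y 0 = dT (dbl ((dbl ^^ t) z)) (dbl 0)" using zN by (simp add: dbl_def)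
        also have "\<dots> \<le> 2 * dT ((dbl ^^ t) z) 0" by (rule dT_dbl)
        finally have "dT ((dbl ^^ t) z) 0 \<ge> d0 / 2" using y(3)[of 0] unfolding b_def by simp
        then show ?thesis using i1 unfolding b_def by linarith
      qed
    qed
    have "(h, cellf M y) \<in> (Gg M b)\<^sup>*"
      by (rule backward_lemma[OF M_def N1(1) y(1,2) hM]) (use far in \<open>simp add: z_def\<close>)
    then show ?thesis unfolding G_def .
  qed
  define S where "S = SCC G h"
  have goodS: "cellf M y \<in> S" if y: "0 \<le> y" "y < 1" "\<And>n. dT ((dbl ^^ n) y) b \<ge> d0" for y
    using fwd[OF y] bwd[OF y] unfolding S_def SCC_def by simp
  have s7: "dT ((dbl ^^ n) (1/7)) b \<ge> d0" for n
    using seventh_far[of n] d0 unfolding b_def by linarith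
  have h7S: "h7 \<in> S" unfolding h7_def
    by (rule goodS[OF _ _ s7]) auto
  have hS: "h \<in> S" unfolding S_def by (rule h_in_SCC)
  have f3: "dT ((dbl ^^ n) (1/3)) b > 1 / real M" for n
    using third_far[of n] i3 unfolding b_def by linarith
  have f7: "dT ((dbl ^^ n) (1/7)) b > 1 / real M" for n
    using seventh_far[of n] i3 unfolding b_def by linarith
  have c2: "(h, h) \<in> G ^^ 2"
  proof -
    have "(cellf M (1/3), cellf M ((dbl ^^ 2) (1/3))) \<in> Gg M b ^^ 2"
      by (rule path_relpow[OF M_def N1(1) _ _ f3]) auto
    then show ?thesis unfolding G_def h_def dbl2_third .
  qed
  have c3: "(h7, h7) \<in> G ^^ 3"
  proof -
    have "(cellf M (1/7), cellf M ((dbl ^^ 3) (1/7))) \<in> Gg M b ^^ 3"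
      by (rule path_relpow[OF M_def N1(1) _ _ f7]) auto
    then show ?thesis unfolding G_def h7_def dbl3_seventh .
  qed
  define R where "R = restr G S"
  have r2: "(h, h) \<in> R ^^ 2" unfolding R_def S_def by (rule relpow_restr_SCC[OF c2]) (use hS in \<open>simp_all add: S_def\<close>)
  have r3: "(h7, h7) \<in> R ^^ 3" unfolding R_def S_def by (rule relpow_restr_SCC[OF c3]) (use h7S in \<open>simp_all add: S_def\<close>)
  have "(h, h7) \<in> R\<^sup>*" unfolding R_def S_def by (rule SCC_irred) (use hS h7S in \<open>simp_all add: S_def\<close>)
  then obtain p where p: "(h, h7) \<in> R ^^ p" by (metis rtrancl_imp_relpow)
  have "(h7, h) \<in> R\<^sup>*" unfolding R_def S_def by (rule SCC_irred) (use hS h7S in \<open>simp_all add: S_def\<close>)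
  then obtain q where q: "(h7, h) \<in> R ^^ q" by (metis rtrancl_imp_relpow)
  have w1: "(h, h) \<in> R ^^ (p + q)" by (rule relpow_add_I[OF p q])
  have "(h, h7) \<in> R ^^ (p + 3)" by (rule relpow_add_I[OF p r3])
  then have w2: "(h, h) \<in> R ^^ (p + 3 + q)" by (rule relpow_add_I[OF _ q])
  obtain nod where nod: "(h, h) \<in> R ^^ nod" "odd nod"
  proof (cases "odd (p + q)")
    case True then show ?thesis using that w1 by blast
  next
    case False
    then have "odd (p + 3 + q)" by simp
    then show ?thesis using that w2 by blast
  qed
  have loops: "\<forall>n\<ge>nod. (h, h) \<in> R ^^ n" using loops_from_2_odd[OF r2 nod(1) nod(2)] by blast
  have "good_graph 0 d0 M h"
    unfolding good_graph_def
  proof (intro conjI allI impI)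
    show "\<exists>N. M = 2^N \<and> 2 \<le> N" using M_def N1 by blast
    show "h < M" by (rule hM)
    show "h \<notin> Rset M 0" using h_notR unfolding b_def .
    fix y assume "0 \<le> y" "y < 1" "\<forall>n. d0 \<le> dT ((dbl ^^ n) y) 0"
    then show "cellf M y \<in> SCC (Gg M 0) h" using goodS unfolding S_def G_def b_def by auto
  next
    show "\<exists>n0. \<forall>n\<ge>n0. (h, h) \<in> restr (Gg M 0) (SCC (Gg M 0) h) ^^ n"
      using loops unfolding R_def S_def G_def b_def by blast
  qed
  then show ?thesis by blast
qed

lemma arc_open_cell: assumes "k < M"
  shows "arc_open (real k / real M) (1 / real M) = {t. real k / real M < t \<and> t < real (k+1) / real M}"
proof -
  have Mp: "0 < M" using assms by simp
  have "real (k+1) \<le> real M" using assms by linarith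
  then have le1: "real (k+1) / real M \<le> 1" using Mp by simp
  have k0: "0 \<le> real k / real M" by simp
  show ?thesis
  proof
    show "arc_open (real k / real M) (1 / real M) \<subseteq> {t. real k / real M < t \<and> t < real (k+1) / real M}"
    proof
      fix x assume "x \<in> arc_open (real k / real M) (1 / real M)"
      then obtain t where t: "x = frac t" "real k / real M < t" "t < real k / real M + 1 / real M"
        by (auto simp: arc_open_def)
      have e: "real k / real M + 1 / real M = real (k+1) / real M" by (simp add: add_divide_distrib)
      have "0 \<le> t" "t < 1" using t k0 le1 e by linarith+
      then have "x = t" using t(1) by (simp add: frac_eq)
      then show "x \<in> {t. real k / real M < t \<and> t < real (k+1) / real M}" using t e by simp
    qed
    show "{t. real k / real M < t \<and> t < real (k+1) / real M} \<subseteq> arc_open (real k / real M) (1 / real M)"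
    proof
      fix x assume x: "x \<in> {t. real k / real M < t \<and> t < real (k+1) / real M}"
      have e: "real k / real M + 1 / real M = real (k+1) / real M" by (simp add: add_divide_distrib)
      have x2: "real k / real M < x" "x < real (k+1) / real M" using x by auto
      have "0 \<le> x" "x < 1" using x2 k0 le1 by linarith+
      then have "x = frac x" by (simp add: frac_eq)
      then show "x \<in> arc_open (real k / real M) (1 / real M)" using x e unfolding arc_open_def by auto
    qed
  qed
qed

lemma even_mod_facts: assumes "M = 2^N" "1 \<le> N" "k < M"
  shows "(2*k) mod M + 1 < M" "(2*k+1) mod M = (2*k) mod M + 1"
    "real (2*k) / real M = real ((2*k) mod M) / real M \<or> real (2*k) / real M = real ((2*k) mod M) / real M + 1"
proof -
  obtain H where H: "M = 2 * H" using assms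
    by (metis One_nat_def Suc_le_lessD power_eq_if less_not_refl2 mult.commute neq0_conv power_0 zero_less_Suc power_Suc)
  have Mp: "0 < M" using assms by simp
  have A: "(2*k) mod M + 1 < M \<and> (2*k+1) mod M = (2*k) mod M + 1 \<and> (2*k = (2*k) mod M \<or> 2*k = (2*k) mod M + M)"
  proof (cases "2*k < M")
    case True
    then have "2*k+1 < M" using H by presburger
    then show ?thesis using True by simp
  next
    case False
    have a: "(2*k) mod M = 2*k - M" using False assms(3) by (simp add: mod_if)
    have b: "(2*k+1) mod M = 2*k+1 - M" using False assms(3) by (simp add: mod_if)
    have "2*k - M + 1 < M" using assms(3) False by presburger
    then show ?thesis using a b False by simp
  qed
  then show "(2*k) mod M + 1 < M" "(2*k+1) mod M = (2*k) mod M + 1" by auto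
  from A have "2*k = (2*k) mod M \<or> 2*k = (2*k) mod M + M" by blast
  then show "real (2*k) / real M = real ((2*k) mod M) / real M \<or> real (2*k) / real M = real ((2*k) mod M) / real M + 1"
  proof
    assume "2*k = (2*k) mod M" then show ?thesis by simp
  next
    assume e: "2*k = (2*k) mod M + M"
    have "real (2*k) / real M = (real ((2*k) mod M) + real M) / real M" using e by (metis of_nat_add)
    also have "\<dots> = real ((2*k) mod M) / real M + 1" using Mp by (simp add: add_divide_distrib)
    finally show ?thesis by simp
  qed
qed

lemma image_cell: assumes "M = 2^N" "1 \<le> N" "k < M"
  shows "dbl ` arc (real k / real M) (1 / real M) = arc (real ((2*k) mod M) / real M) (2 / real M)"
    "dbl ` arc_open (real k / real M) (1 / real M) = arc_open (real ((2*k) mod M) / real M) (2 / real M)"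
proof -
  have i1: "dbl ` arc (real k / real M) (1 / real M) = arc (real (2*k) / real M) (2 / real M)"
    by (simp add: dbl_image_arc)
  have i2: "dbl ` arc_open (real k / real M) (1 / real M) = arc_open (real (2*k) / real M) (2 / real M)"
    by (simp add: dbl_image_arc_open)
  have s1: "arc (a + 1) l = arc a l" for a l using arc_shift[of a 1 l] by simp
  have s2: "arc_open (a + 1) l = arc_open a l" for a l using arc_open_shift[of a 1 l] by simp
  from even_mod_facts(3)[OF assms] show
    "dbl ` arc (real k / real M) (1 / real M) = arc (real ((2*k) mod M) / real M) (2 / real M)"
    "dbl ` arc_open (real k / real M) (1 / real M) = arc_open (real ((2*k) mod M) / real M) (2 / real M)"
    using i1 i2 s1 s2 by auto
qed

lemma arc_sub: assumes "a \<le> a'" "a' + l' \<le> a + l" shows "arc a' l' \<subseteq> arc a l"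
  using assms unfolding arc_def by fastforce

lemma arc_open_sub_interval: assumes "k2 + 2 \<le> M" "0 < M"
  shows "arc_open (real k2 / real M) (2 / real M) \<subseteq> {t. real k2 / real M < t \<and> t < real (k2+2) / real M}"
proof
  fix x assume "x \<in> arc_open (real k2 / real M) (2 / real M)"
  then obtain t where t: "x = frac t" "real k2 / real M < t" "t < real k2 / real M + 2 / real M"
    by (auto simp: arc_open_def)
  have e: "real k2 / real M + 2 / real M = real (k2+2) / real M" by (simp add: add_divide_distrib)
  have "real (k2+2) \<le> real M" using assms by linarith
  then have le1: "real (k2+2) / real M \<le> 1" using assms by simp
  have "0 \<le> t" "t < 1" using t le1 e by (simp_all add: order_less_le_trans) (smt (verit) divide_nonneg_nonneg of_nat_0_le_iff)
  then have "x = t" using t(1) by (simp add: frac_eq)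
  then show "x \<in> {t. real k2 / real M < t \<and> t < real (k2+2) / real M}" using t e by simp
qed

lemma markov_cells: assumes M: "M = 2^N" "1 \<le> N" and k: "k < M" and l: "l < M"
  shows "(k, l) \<in> Eg M \<Longrightarrow> arc (real l / real M) (1 / real M) \<subseteq> dbl ` arc (real k / real M) (1 / real M)"
    and "(k, l) \<notin> Eg M \<Longrightarrow> dbl ` arc_open (real k / real M) (1 / real M) \<inter> arc_open (real l / real M) (1 / real M) = {}"
proof -
  define k2 where "k2 = (2*k) mod M"
  have Mp: "0 < M" using M by simp
  have f1: "k2 + 1 < M" "(2*k+1) mod M = k2 + 1" using even_mod_facts[OF M k] unfolding k2_def by auto
  have im: "dbl ` arc (real k / real M) (1 / real M) = arc (real k2 / real M) (2 / real M)"
    "dbl ` arc_open (real k / real M) (1 / real M) = arc_open (real k2 / real M) (2 / real M)"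
    using image_cell[OF M k] unfolding k2_def by auto
  show "arc (real l / real M) (1 / real M) \<subseteq> dbl ` arc (real k / real M) (1 / real M)" if "(k, l) \<in> Eg M"
  proof -
    have "l = k2 \<or> l = k2 + 1" using that f1 unfolding Eg_def k2_def by auto
    then have "real k2 / real M \<le> real l / real M" "real l / real M + 1 / real M \<le> real k2 / real M + 2 / real M"
      using Mp by (auto simp: divide_right_mono add_divide_distrib[symmetric])
    then show ?thesis unfolding im by (rule arc_sub)
  qed
  show "dbl ` arc_open (real k / real M) (1 / real M) \<inter> arc_open (real l / real M) (1 / real M) = {}" if "(k, l) \<notin> Eg M"
  proof -
    have ne: "l \<noteq> k2" "l \<noteq> k2 + 1" using that f1 k l unfolding Eg_def k2_def by auto
    have A: "arc_open (real k2 / real M) (2 / real M) \<subseteq> {t. real k2 / real M < t \<and> t < real (k2+2) / real M}"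
      using arc_open_sub_interval f1 Mp by simp
    have B: "arc_open (real l / real M) (1 / real M) = {t. real l / real M < t \<and> t < real (l+1) / real M}"
      using arc_open_cell[OF l] .
    have "l + 1 \<le> k2 \<or> k2 + 2 \<le> l" using ne by linarith
    then have "real (l+1) / real M \<le> real k2 / real M \<or> real (k2+2) / real M \<le> real l / real M"
      using Mp by (auto simp: divide_right_mono)
    then show ?thesis unfolding im using A B by auto
  qed
qed

lemma b_props: fixes c :: real assumes "0 < c" "c < 1"
  shows "0 \<le> frac (1/2 - c) \<and> frac (1/2 - c) < 1 \<and> frac (1/2 - c) \<noteq> 1/2"
proof (cases "0 \<le> 1/2 - c")
  case True
  then have "frac (1/2 - c) = 1/2 - c" using assms True by (simp add: frac_eq)
  then show ?thesis using assms True by (simp add: frac_lt_1)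
next
  case False
  have "frac (1/2 - c) = 3/2 - c" using False assms
    by (subst frac_unique_iff) (auto intro: Ints_of_int[of "-1", simplified])
  then show ?thesis using assms False by (simp add: frac_lt_1)
qed

lemma good_graph_exists:
  assumes "0 \<le> b" "b < 1" "b \<noteq> 1/2" "0 < d0" "d0 \<le> 1/8"
  shows "\<exists>M h. good_graph b d0 M h"
proof -
  consider "b = 0" | "0 < b \<and> b < 1/2" | "1/2 < b \<and> b < 1" using assms by linarith
  then show ?thesis
  proof cases
    case 1 then show ?thesis using case_zero assms by simp
  next
    case 2 then show ?thesis using case_lo assms by blast
  next
    case 3 then show ?thesis using case_hi assms by blast
  qed
qed

lemma SCC_props: assumes "h < M" "h \<notin> Rset M b" "v \<in> SCC (Gg M b) h"
  shows "v < M \<and> v \<notin> Rset M b"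
proof -
  have "(h, v) \<in> (Gg M b)\<^sup>*" using assms(3) by (simp add: SCC_def)
  then show ?thesis
  proof (cases rule: rtranclE)
    case base then show ?thesis using assms by simp
  next
    case (step u) then show ?thesis by (auto simp: Gg_def Eg_def)
  qed
qed

lemma cell_disjoint: assumes "k1 < M" "k2 < M" "k1 \<noteq> k2"
  shows "arc_open (real k1 / real M) (1 / real M) \<inter> arc_open (real k2 / real M) (1 / real M) = {}"
proof -
  have Mp: "0 < M" using assms by simp
  have "False" if x1: "real k1 / real M < x" "x < real (k1+1) / real M"
      and x2: "real k2 / real M < x" "x < real (k2+1) / real M" for x
  proof -
    have "real k1 < real M * x" "real M * x < real k1 + 1" "real k2 < real M * x" "real M * x < real k2 + 1"
      using x1 x2 Mp by (simp_all add: field_simps)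
    then have "real k1 < real k2 + 1" "real k2 < real k1 + 1" by linarith+
    then have "k1 < k2 + 1" "k2 < k1 + 1" by linarith+
    then show False using assms(3) by simp
  qed
  then show ?thesis unfolding arc_open_cell[OF assms(1)] arc_open_cell[OF assms(2)] by blast
qed

theorem proposition6p2:
  fixes c \<delta> :: real
  assumes "0 < c" and "c < 1" and "0 < \<delta>"
  defines "b \<equiv> frac (1/2 - c)"
  shows "\<exists>m a l. markov_subsystem b m a l \<and> irreducible_ms m a l \<and> aperiodic_ms m a l
           \<and> K_set b \<delta> \<subseteq> max_inv_set m a l \<and> b \<notin> max_inv_set m a l"
proof -
  have bp: "0 \<le> b" "b < 1" "b \<noteq> 1/2" using b_props[OF assms(1,2)] unfolding b_def by auto
  define d0 where "d0 = min \<delta> (1/8)"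
  have d0: "0 < d0" "d0 \<le> 1/8" "d0 \<le> \<delta>" using assms(3) unfolding d0_def by auto
  obtain M h where gg: "good_graph b d0 M h" using good_graph_exists[OF bp d0(1,2)] by blast
  obtain N where MN: "M = 2^N" "2 \<le> N" using gg unfolding good_graph_def by blast
  have hM: "h < M" and hR: "h \<notin> Rset M b" using gg unfolding good_graph_def by auto
  define G where "G = Gg M b"
  define S where "S = SCC G h"
  have good: "cellf M y \<in> S" if "0 \<le> y" "y < 1" "\<And>n. dT ((dbl ^^ n) y) b \<ge> d0" for y
    using gg that unfolding good_graph_def S_def G_def by blast
  obtain n0 where loops: "\<And>n. n \<ge> n0 \<Longrightarrow> (h, h) \<in> restr G S ^^ n"
    using gg unfolding good_graph_def S_def G_def by blast
  have N1: "1 \<le> N" using MN by simp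
  have Mp: "0 < M" using MN by simp
  have M4: "(4::real) \<le> real M"
  proof -
    have "(2::real)^2 \<le> 2^N" using MN by (intro power_increasing) auto
    then show ?thesis using MN by simp
  qed
  have Sprop: "v < M \<and> v \<notin> Rset M b" if "v \<in> S" for v
    using SCC_props[OF hM hR] that unfolding S_def G_def by blast
  have finS: "finite S" using Sprop by (metis finite_nat_set_iff_bounded)
  have hS: "h \<in> S" unfolding S_def by (rule h_in_SCC)
  define xs where "xs = sorted_list_of_set S"
  define m where "m = length xs"
  define s where "s j = xs ! j" for j
  define a where "a j = real (s j) / real M" for j
  define l where "l j = 1 / real M" for j :: nat
  have setxs: "set xs = S" and dxs: "distinct xs" using finS unfolding xs_def by auto
  have sS: "s j \<in> S" if "j < m" for j using that setxs unfolding s_def m_def by auto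
  have sM: "s j < M" "s j \<notin> Rset M b" if "j < m" for j using Sprop[OF sS[OF that]] by auto
  have surj: "\<exists>j<m. s j = v" if "v \<in> S" for v
    using that setxs unfolding s_def m_def by (metis in_set_conv_nth)
  have sinj: "j = k" if "j < m" "k < m" "s j = s k" for j k
    using that dxs unfolding s_def m_def by (simp add: nth_eq_iff_index_eq)
  define TG where "TG = trans_graph m a l"
  have edge: "(j, k) \<in> TG" if "j < m" "k < m" "(s j, s k) \<in> Eg M" for j k
    using markov_cells(1)[OF MN(1) N1 sM(1)[OF that(1)] sM(1)[OF that(2)] that(3)] that(1,2)
    unfolding TG_def trans_graph_def a_def l_def by simp
  have transp: "\<And>v k. (u, v) \<in> restr G S ^^ n \<Longrightarrow> j < m \<Longrightarrow> s j = u \<Longrightarrow> k < m \<Longrightarrow> s k = v \<Longrightarrow> (j, k) \<in> TG ^^ n"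
    for u j n
  proof (induction n)
    case 0
    then have "s j = s k" by simp
    then show ?case using sinj 0 by simp
  next
    case (Suc n)
    from Suc.prems(1) obtain w where w1: "(u, w) \<in> restr G S ^^ n" and w2: "(w, v) \<in> restr G S"
      by auto
    have wS: "w \<in> S" using w2 unfolding restr_def by simp
    obtain k1 where k1: "k1 < m" "s k1 = w" using surj[OF wS] by blast
    have a1: "(j, k1) \<in> TG ^^ n" using Suc.IH[OF w1 Suc.prems(2,3) k1] .
    have "(w, v) \<in> Eg M" using w2 unfolding restr_def G_def Gg_def by simp
    then have "(k1, k) \<in> TG" using edge[OF k1(1) Suc.prems(4)] k1(2) Suc.prems(5) by simp
    then show ?case using a1 by auto
  qed
  have irr: "irreducible_ms m a l"
    unfolding irreducible_ms_def
  proof (intro allI impI)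
    fix j k assume j: "j < m" and k: "k < m"
    have "(s j, s k) \<in> (restr G S)\<^sup>*" unfolding S_def by (rule SCC_irred) (use sS j k in \<open>simp_all add: S_def\<close>)
    then obtain n where "(s j, s k) \<in> restr G S ^^ n" by (metis rtrancl_imp_relpow)
    then have "(j, k) \<in> TG ^^ n" using transp j k by blast
    then show "(j, k) \<in> (trans_graph m a l)\<^sup>*" unfolding TG_def by (metis relpow_imp_rtrancl)
  qed
  have ap: "aperiodic_ms m a l"
  proof -
    have tto: "(u, h) \<in> (restr G S)\<^sup>*" if "u \<in> S" for u
      unfolding S_def by (rule SCC_irred) (use that hS in \<open>simp_all add: S_def\<close>)
    have frm: "(h, u) \<in> (restr G S)\<^sup>*" if "u \<in> S" for u
      unfolding S_def by (rule SCC_irred) (use that hS in \<open>simp_all add: S_def\<close>)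
    obtain P where P: "P \<ge> 1" "\<forall>u\<in>S. \<forall>v\<in>S. (u, v) \<in> restr G S ^^ P"
      using aperiodic_from_hub[OF finS tto frm loops] by blast
    have "(j, k) \<in> TG ^^ P" if "j < m" "k < m" for j k
      using transp[OF _ that(1) refl that(2) refl] P(2) sS that by blast
    then show ?thesis unfolding aperiodic_ms_def TG_def using P(1) by blast
  qed
  have m1: "1 \<le> m"
  proof -
    have "card S \<ge> 1" using finS hS by (metis One_nat_def Suc_leI card_gt_0_iff empty_iff)
    moreover have "m = card S" unfolding m_def xs_def using finS by simp
    ultimately show ?thesis by simp
  qed
  have lpos: "0 < 1 / real M" "1 / real M < 1" "1 / real M < 1/2" "2 / real M < 1" using M4 by (simp_all add: field_simps)
  have ms: "markov_subsystem b m a l"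
    unfolding markov_subsystem_def
  proof (intro conjI allI impI)
    show "1 \<le> m" by (rule m1)
    fix j assume j: "j < m"
    show "0 < l j" "l j < 1" unfolding l_def using lpos by auto
    show "b \<notin> arc (a j) (l j)" using sM[OF j] unfolding a_def l_def Rset_def by auto
    show "inj_on dbl (arc (a j) (l j))" unfolding l_def by (rule inj_dbl_arc) (use lpos in simp)
    show "is_closed_subinterval (dbl ` arc (a j) (l j))"
      unfolding is_closed_subinterval_def dbl_image_arc l_def using lpos
      by (intro exI[of _ "2 * a j"] exI[of _ "2 * (1 / real M)"]) auto
  next
    fix j k assume j: "j < m" and k: "k < m" and jk: "j \<noteq> k"
    have "s j \<noteq> s k" using sinj j k jk by blast
    then show "arc_open (a j) (l j) \<inter> arc_open (a k) (l k) = {}"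
      unfolding a_def l_def by (rule cell_disjoint[OF sM(1)[OF j] sM(1)[OF k]])
  next
    fix j k assume j: "j < m" and k: "k < m"
    show "dbl ` arc_open (a j) (l j) \<inter> arc_open (a k) (l k) = {} \<or> arc (a k) (l k) \<subseteq> dbl ` arc (a j) (l j)"
    proof (cases "(s j, s k) \<in> Eg M")
      case True
      then show ?thesis using markov_cells(1)[OF MN(1) N1 sM(1)[OF j] sM(1)[OF k]] unfolding a_def l_def by blast
    next
      case False
      then show ?thesis using markov_cells(2)[OF MN(1) N1 sM(1)[OF j] sM(1)[OF k]] unfolding a_def l_def by blast
    qed
  qed
  have Ksub: "K_set b \<delta> \<subseteq> max_inv_set m a l"
  proof
    fix x assume x: "x \<in> K_set b \<delta>"
    then have x01: "0 \<le> x" "x < 1" and xd: "\<And>n. dT ((dbl ^^ n) x) b \<ge> \<delta>"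
      unfolding K_set_def circ_def by auto
    show "x \<in> max_inv_set m a l"
      unfolding max_inv_set_def
    proof (intro CollectI allI)
      fix n
      define y where "y = (dbl ^^ n) x"
      have y01: "0 \<le> y" "y < 1" using dbl_iter_range[OF x01] unfolding y_def by auto
      have yd: "dT ((dbl ^^ k) y) b \<ge> d0" for k
      proof -
        have "(dbl ^^ k) y = (dbl ^^ (k + n)) x" unfolding y_def by (simp add: funpow_add)
        then show ?thesis using xd[of "k + n"] d0(3) by simp
      qed
      have "cellf M y \<in> S" using good[OF y01 yd] .
      then obtain j where j: "j < m" "s j = cellf M y" using surj by blast
      have "y \<in> arc (a j) (l j)" using cell_arc[OF y01 Mp] j(2) unfolding a_def l_def by simp
      then show "(dbl ^^ n) x \<in> (\<Union>j<m. arc (a j) (l j))" using j(1) unfolding y_def by blast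
    qed
  qed
  have bnot: "b \<notin> max_inv_set m a l"
  proof
    assume "b \<in> max_inv_set m a l"
    then have "(dbl ^^ 0) b \<in> (\<Union>j<m. arc (a j) (l j))" unfolding max_inv_set_def by blast
    then obtain j where j: "j < m" "b \<in> arc (a j) (l j)" by auto
    then show False using sM[OF j(1)] unfolding a_def l_def Rset_def by auto
  qed
  show ?thesis using ms irr ap Ksub bnot by blast
qed

end
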